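(* Let $\ell_n=\Psi(L_n)$, $z_n=\Psi(Z_n)$, $h_n=\Psi(H_n)$. Let $r_L$, $r_Z$, $r_H$ be the largest real roots of $t^5-4t^4-t-1$, $t^7-3t^6-t^5-6t^4-7t^3-7t^2-5t-1$ and $t^7-t^6-7t^5-12t^4-6t^3-7t^2-4t-2$, respectively. Then $\lim_{n\to\infty}\ell_n^{1/n}=r_L\approx 4.01923$, $\lim_{n\to\infty}z_n^{1/n}=r_Z\approx 3.83256$ and $\lim_{n\to\infty}h_n^{1/n}=r_H\approx 3.81063$.
   Context: A matching of a graph is a set of pairwise vertex-disjoint edges; it is maximal if it is not a proper subset of another matching. $\Psi(G)$ is the number of maximal matchings of $G$. A benzenoid system is a connected plane graph without cut-vertices in which every bounded face is a hexagon, any two hexagonal faces being either disjoint or sharing exactly one edge (then they are adjacent). It is catacondensed if no vertex lies in three hexagons, and a benzenoid chain if moreover no hexagon is adjacent to three other hexagons; its length is its number of hexagons. In a chain, the two hexagons adjacent to only one other hexagon are terminal, the rest interior. An interior hexagon has exactly two vertices of degree 2; it is straight if these are non-adjacent and kinky if they are adjacent. $L_n$ is the benzenoid chain of length $n$ with all interior hexagons straight; $Z_n$ is the one with all interior hexagons kinky and successive kinks turning alternately in opposite directions; $H_n$ (helicene) is the one with all interior hexagons kinky and all kinks turning in the same direction (viewed as an abstract graph). *)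

theory Defs
  imports Complex_Main
begin

text \<open>Graphs are given by their edge sets: an edge is a 2-element set of vertices.\<close>

definition is_matching :: "'a set set \<Rightarrow> 'a set set \<Rightarrow> bool" where
  "is_matching E M \<longleftrightarrow> M \<subseteq> E \<and> (\<forall>e\<in>M. \<forall>f\<in>M. e \<noteq> f \<longrightarrow> e \<inter> f = {})"

definition is_maximal_matching :: "'a set set \<Rightarrow> 'a set set \<Rightarrow> bool" where
  "is_maximal_matching E M \<longleftrightarrow> is_matching E M \<and> \<not> (\<exists>M'. is_matching E M' \<and> M \<subset> M')"

definition Psi :: "'a set set \<Rightarrow> nat" where
  "Psi E = card {M. is_maximal_matching E M}"

text \<open>A state consists of the current edge set,
  the vertex cycle of the last hexagon (consistently oriented, its first two vertices
  forming the edge shared with the previous hexagon), and the next fresh vertex.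
  A new hexagon is glued onto the edge (c!k, c!(k+1)) of the last hexagon, k \<in> {2,3,4}:
  k = 3 makes the last hexagon straight, k = 2 / k = 4 make it kinky, turning in
  one / the opposite direction.\<close>

definition attach :: "nat \<Rightarrow> nat set set \<times> nat list \<times> nat \<Rightarrow> nat set set \<times> nat list \<times> nat" where
  "attach k s = (case s of (E, c, m) \<Rightarrow>
     (E \<union> {{c!k, m}, {m, m+1}, {m+1, m+2}, {m+2, m+3}, {m+3, c!(k+1)}},
      [c!(k+1), c!k, m, m+1, m+2, m+3], m + 4))"

definition hex0 :: "nat set set \<times> nat list \<times> nat" where
  "hex0 = ({{0,1},{1,2},{2,3},{3,4},{4,5},{5,0}}, [0,1,2,3,4,5], 6)"

text \<open>Edge set of the chain obtained from one hexagon by successively attaching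
  hexagons with the given codes (a list of length n-1 gives a chain of length n).\<close>
definition chain_graph :: "nat list \<Rightarrow> nat set set" where
  "chain_graph ks = fst (foldl (\<lambda>s k. attach k s) hex0 ks)"

text \<open>The first attachment (to the terminal first hexagon) is arbitrary; we use 3.\<close>
definition L_chain :: "nat \<Rightarrow> nat set set" where
  "L_chain n = chain_graph (replicate (n - 1) 3)"

definition Z_chain :: "nat \<Rightarrow> nat set set" where
  "Z_chain n = chain_graph (map (\<lambda>i. if i = 0 then 3 else if odd i then 2 else 4) [0..<n - 1])"

definition H_chain :: "nat \<Rightarrow> nat set set" where
  "H_chain n = chain_graph (map (\<lambda>i. if i = 0 then 3 else 2) [0..<n - 1])"

definition largest_real_root :: "(real \<Rightarrow> real) \<Rightarrow> real" where
  "largest_real_root f = Max {t. f t = 0}"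

end

theory Submission
  imports Defs "HOL-Computational_Algebra.Polynomial"
begin

definition freeE :: "nat list \<Rightarrow> nat set set" where
  "freeE c = {{c!i, c!(Suc i mod 6)} | i. 0 < i \<and> i < 6}"

definition valid :: "nat set set \<times> nat list \<times> nat \<Rightarrow> nat set set \<Rightarrow> bool" where
  "valid s M = (is_matching (fst s) M \<and> (\<forall>e\<in>fst s. e \<notin> freeE (fst (snd s)) \<longrightarrow> e \<inter> \<Union>M \<noteq> {}))"

definition bits :: "nat list \<Rightarrow> nat set set \<Rightarrow> bool list" where
  "bits c M = map (\<lambda>i. c!i \<in> \<Union>M) [0..<6]"

definition Fs :: "nat set set \<times> nat list \<times> nat \<Rightarrow> (bool list \<Rightarrow> int) \<Rightarrow> int" where
  "Fs s w = (\<Sum>M\<in>{M. valid s M}. w (bits (fst (snd s)) M))"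

definition cinv :: "nat set set \<times> nat list \<times> nat \<Rightarrow> bool" where
  "cinv s = (case s of (E,c,m) \<Rightarrow> finite E \<and> (\<forall>e\<in>E. \<exists>a b. a \<noteq> b \<and> e = {a,b}) \<and> (\<forall>e\<in>E. \<forall>v\<in>e. v < m)
     \<and> length c = 6 \<and> distinct c \<and> (\<forall>i<6. c!i < m) \<and> (\<forall>i<6. {c!i, c!(Suc i mod 6)} \<in> E)
     \<and> (\<forall>e\<in>E. \<forall>j. 2 \<le> j \<and> j < 6 \<and> c!j \<in> e \<longrightarrow> e \<in> freeE c))"

definition pe :: "nat list \<Rightarrow> nat \<Rightarrow> nat \<Rightarrow> nat \<Rightarrow> nat set" where
  "pe c k m i = (if i = 0 then {c!k, m} else if i = 4 then {m+3, c!(Suc k)} else {m+i-1, m+i})"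

definition Xe :: "nat list \<Rightarrow> nat \<Rightarrow> nat \<Rightarrow> bool list \<Rightarrow> nat set set" where
  "Xe c k m x = {pe c k m i | i. i < 5 \<and> x!i}"

definition Xs :: "bool list list" where
  "Xs = [[False,False,False,False,False],[True,False,False,False,False],[False,True,False,False,False],
         [False,False,True,False,False],[False,False,False,True,False],[False,False,False,False,True],
         [True,False,True,False,False],[True,False,False,True,False],[True,False,False,False,True],
         [False,True,False,True,False],[False,True,False,False,True],[False,False,True,False,True],
         [True,False,True,False,True]]"

definition okc :: "nat \<Rightarrow> bool list \<Rightarrow> bool list \<Rightarrow> nat \<Rightarrow> bool" where
  "okc k b x i = (b!i \<or> (x!0 \<and> i = k) \<or> (x!4 \<and> i = Suc k))"

definition ok :: "nat \<Rightarrow> bool list \<Rightarrow> bool list \<Rightarrow> bool" where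
  "ok k b x = ((x!0 \<longrightarrow> \<not> b!k) \<and> (x!4 \<longrightarrow> \<not> b!(Suc k)) \<and>
     (okc k b x 0 \<or> okc k b x 1) \<and> (okc k b x 1 \<or> okc k b x 2) \<and> (okc k b x 2 \<or> okc k b x 3) \<and>
     (okc k b x 3 \<or> okc k b x 4) \<and> (okc k b x 4 \<or> okc k b x 5) \<and> (okc k b x 5 \<or> okc k b x 0))"

definition nxt :: "nat \<Rightarrow> bool list \<Rightarrow> bool list \<Rightarrow> bool list" where
  "nxt k b x = [b!(Suc k) \<or> x!4, b!k \<or> x!0, x!0 \<or> x!1, x!1 \<or> x!2, x!2 \<or> x!3, x!3 \<or> x!4]"

definition lift :: "nat \<Rightarrow> (bool list \<Rightarrow> int) \<Rightarrow> bool list \<Rightarrow> int" where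
  "lift k w b = sum_list (map (\<lambda>x. if ok k b x then w (nxt k b x) else 0) Xs)"

lemma attach_eq: "attach k (E,c,m) = (E \<union> {pe c k m i | i. i < 5}, [c!Suc k, c!k, m, m+1, m+2, m+3], m+4)"
proof -
  have "{pe c k m i | i. i < 5} = {{c!k, m}, {m, m+1}, {m+1, m+2}, {m+2, m+3}, {m+3, c!(k+1)}}"
  proof -
    have "{pe c k m i | i. i < 5} = pe c k m ` {..<5}" by blast
    also have "{..<5::nat} = {0,1,2,3,4}" by auto
    also have "pe c k m ` {0,1,2,3,4} = {{c!k, m}, {m, m+1}, {m+1, m+2}, {m+2, m+3}, {m+3, c!(k+1)}}"
      by (simp add: pe_def insert_commute)
    finally show ?thesis .
  qed
  then show ?thesis by (simp add: attach_def)
qed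

lemma map6: "map f [0..<6] = [f 0, f 1, f 2, f 3, f 4, f (5::nat)]"
proof -
  have "[0..<6] = [0,1,2,3,4,5::nat]" by (simp add: upt_rec)
  then show ?thesis by simp
qed

lemma freeE_eq: "freeE l = (\<lambda>i. {l!i, l!(Suc i mod 6)}) ` {1,2,3,4,5}"
proof -
  have "freeE l = (\<lambda>i. {l!i, l!(Suc i mod 6)}) ` {i. 0 < i \<and> i < 6}" unfolding freeE_def by blast
  also have "{i::nat. 0 < i \<and> i < 6} = {1,2,3,4,5}" by auto
  finally show ?thesis .
qed

lemma Xs_nadj0: "\<forall>x\<in>set Xs. \<forall>i\<in>{0,1,2,3}. \<not>(x!i \<and> x!Suc i)"
  by (simp add: Xs_def)

lemma Xs_nadj: "x \<in> set Xs \<Longrightarrow> i < 4 \<Longrightarrow> \<not> (x!i \<and> x!Suc i)"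
proof -
  assume "x \<in> set Xs" "i < 4"
  then have "i \<in> {0,1,2,3}" by auto
  then show ?thesis using Xs_nadj0 `x \<in> set Xs` by blast
qed

lemma Xs_len: "x \<in> set Xs \<Longrightarrow> length x = 5"
  by (auto simp: Xs_def)

lemma Xs_distinct: "distinct Xs" by (simp add: Xs_def)

lemma in_Xs: assumes "length x = 5" "\<forall>i<4. \<not> (x!i \<and> x!Suc i)" shows "x \<in> set Xs"
proof -
  obtain x0 x1 x2 x3 x4 where x: "x = [x0,x1,x2,x3,x4]"
    using assms(1) by (auto simp: length_Suc_conv numeral_eq_Suc)
  have "\<not>(x0 \<and> x1)" "\<not>(x1 \<and> x2)" "\<not>(x2 \<and> x3)" "\<not>(x3 \<and> x4)"
    using assms(2) unfolding x by (auto dest: spec[of _ 0] spec[of _ 1] spec[of _ 2] spec[of _ 3])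
  then show ?thesis unfolding x Xs_def by (cases x0; cases x1; cases x2; cases x3; cases x4; simp)
qed

lemma ok_cyc: "ok k b x \<Longrightarrow> i < 6 \<Longrightarrow> okc k b x i \<or> okc k b x (Suc i mod 6)"
proof -
  assume "ok k b x" "i < 6"
  then consider "i = 0" | "i = 1" | "i = 2" | "i = 3" | "i = 4" | "i = 5" by linarith
  then show ?thesis
  proof cases
    case 1 then show ?thesis using `ok k b x` unfolding ok_def by simp
  next
    case 2 then show ?thesis using `ok k b x` unfolding ok_def by (simp add: numeral_2_eq_2)
  next
    case 3 then show ?thesis using `ok k b x` unfolding ok_def by simp
  next
    case 4 then show ?thesis using `ok k b x` unfolding ok_def by simp
  next
    case 5 then show ?thesis using `ok k b x` unfolding ok_def by simp
  next
    case 6 then show ?thesis using `ok k b x` unfolding ok_def by simp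
  qed
qed

lemma ok_intro: "(x!0 \<longrightarrow> \<not> b!k) \<Longrightarrow> (x!4 \<longrightarrow> \<not> b!(Suc k)) \<Longrightarrow>
   (\<forall>i<6. okc k b x i \<or> okc k b x (Suc i mod 6)) \<Longrightarrow> ok k b x"
proof -
  assume a: "x!0 \<longrightarrow> \<not> b!k" "x!4 \<longrightarrow> \<not> b!(Suc k)" and h: "\<forall>i<6. okc k b x i \<or> okc k b x (Suc i mod 6)"
  have "okc k b x 0 \<or> okc k b x 1" using h[rule_format, of 0] by simp
  moreover have "okc k b x 1 \<or> okc k b x 2" using h[rule_format, of 1] by (simp add: numeral_2_eq_2)
  moreover have "okc k b x 2 \<or> okc k b x 3" using h[rule_format, of 2] by simp
  moreover have "okc k b x 3 \<or> okc k b x 4" using h[rule_format, of 3] by simp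
  moreover have "okc k b x 4 \<or> okc k b x 5" using h[rule_format, of 4] by simp
  moreover have "okc k b x 5 \<or> okc k b x 0" using h[rule_format, of 5] by simp
  ultimately show ?thesis using a unfolding ok_def by blast
qed

locale stp =
  fixes E :: "nat set set" and c :: "nat list" and m k :: nat
  assumes I: "cinv (E,c,m)" and k2: "2 \<le> k" and k4: "k \<le> 4"
begin

definition "P = {pe c k m i | i. i < 5}"
definition "c' = [c!Suc k, c!k, m, m+1, m+2, m+3]"

lemma finE: "finite E" using I by (simp add: cinv_def)
lemma E2: "e \<in> E \<Longrightarrow> \<exists>u v. u \<noteq> v \<and> e = {u,v}" using I by (simp add: cinv_def)
lemma Ev: "e \<in> E \<Longrightarrow> v \<in> e \<Longrightarrow> v < m" using I by (auto simp: cinv_def)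
lemma lenc: "length c = 6" using I by (simp add: cinv_def)
lemma distc: "distinct c" using I by (simp add: cinv_def)
lemma cm: "i < 6 \<Longrightarrow> c!i < m" using I by (simp add: cinv_def)
lemma cyc: "i < 6 \<Longrightarrow> {c!i, c!(Suc i mod 6)} \<in> E" using I by (simp add: cinv_def)
lemma Eloc: "e \<in> E \<Longrightarrow> 2 \<le> j \<Longrightarrow> j < 6 \<Longrightarrow> c!j \<in> e \<Longrightarrow> e \<in> freeE c"
  using I by (auto simp: cinv_def)

lemma cinj: "i < 6 \<Longrightarrow> j < 6 \<Longrightarrow> c!i = c!j \<longleftrightarrow> i = j"
  using distc lenc by (simp add: nth_eq_iff_index_eq)

lemma am: "c!k < m" "c!Suc k < m" "c!k \<noteq> c!Suc k"
  using cm k4 cinj[of k "Suc k"] by auto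

lemma pe_old: "v < m \<Longrightarrow> i < 5 \<Longrightarrow> v \<in> pe c k m i \<longleftrightarrow> (i = 0 \<and> v = c!k) \<or> (i = 4 \<and> v = c!Suc k)"
  by (auto simp: pe_def)

lemma pe_new: "t < 4 \<Longrightarrow> i < 5 \<Longrightarrow> m + t \<in> pe c k m i \<longleftrightarrow> i = t \<or> i = Suc t"
  using am by (auto simp: pe_def)

lemma pe_cases: "i < 5 \<Longrightarrow> i = 0 \<or> i = 1 \<or> i = 2 \<or> i = 3 \<or> i = (4::nat)" by auto

lemma pe_notE: "i < 5 \<Longrightarrow> pe c k m i \<notin> E"
proof
  assume "i < 5" "pe c k m i \<in> E"
  moreover have "m + 3 \<in> pe c k m i \<or> m \<in> pe c k m i \<or> m+1 \<in> pe c k m i"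
    using `i<5` by (auto simp: pe_def)
  ultimately show False using Ev by fastforce
qed

lemma pe_range: "v \<in> pe c k m i \<Longrightarrow> i < 5 \<Longrightarrow> v = c!k \<or> v = c!Suc k \<or> (\<exists>t<4. v = m + t)"
  unfolding pe_def
  by (cases "i = 0"; cases "i = 4") (auto intro: exI[of _ "i - 1"] exI[of _ i] exI[of _ 3] exI[of _ 0])

lemma pe_adj: "i < 4 \<Longrightarrow> m + i \<in> pe c k m i \<inter> pe c k m (Suc i)"
  using pe_new[of i i] pe_new[of i "Suc i"] by auto

lemma pe_disj: assumes "i < 5" "j < 5" "i \<noteq> j" "j \<noteq> Suc i" "i \<noteq> Suc j"
  shows "pe c k m i \<inter> pe c k m j = {}"
proof (rule ccontr)
  assume "pe c k m i \<inter> pe c k m j \<noteq> {}"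
  then obtain v where v: "v \<in> pe c k m i" "v \<in> pe c k m j" by blast
  show False
  proof (cases "v < m")
    case True
    then show False using pe_old[OF True `i<5`] pe_old[OF True `j<5`] v am assms by auto
  next
    case False
    then obtain t where "t < 4" "v = m + t" using pe_range[OF v(1) `i<5`] am by auto
    then show False using pe_new[of t i] pe_new[of t j] v assms by auto
  qed
qed

lemma pe_inj: assumes "i < 5" "j < 5" "pe c k m i = pe c k m j" shows "i = j"
proof -
  have h: "\<And>t. t < 4 \<Longrightarrow> (i = t \<or> i = Suc t) = (j = t \<or> j = Suc t)"
    using pe_new assms by metis
  show ?thesis using h[of 0] h[of 1] h[of 2] h[of 3] assms(1,2) by arith
qed

lemma pe_two: "i < 5 \<Longrightarrow> \<exists>u v. u \<noteq> v \<and> pe c k m i = {u,v}"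
proof -
  assume "i < 5"
  show ?thesis
  proof (cases "i = 0")
    case True then show ?thesis using am by (intro exI[of _ "c!k"] exI[of _ m]) (simp add: pe_def)
  next
    case F1: False
    show ?thesis
    proof (cases "i = 4")
      case True then show ?thesis using am by (intro exI[of _ "m+3"] exI[of _ "c!Suc k"]) (simp add: pe_def)
    next
      case False then show ?thesis using F1 by (intro exI[of _ "m+i-1"] exI[of _ "m+i"]) (simp add: pe_def)
    qed
  qed
qed

lemma freeE_c': "freeE c' = P"
proof -
  have "freeE c' = (\<lambda>i. pe c k m (i - 1)) ` {1,2,3,4,5}"
    unfolding freeE_eq c'_def pe_def by simp blast
  also have "... = pe c k m ` {0,1,2,3,4}" by simp
  also have "{0,1,2,3,4} = {..<5::nat}" by auto
  also have "pe c k m ` {..<5} = P" unfolding P_def by blast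
  finally show ?thesis .
qed

lemma P_E: "P \<inter> E = {}" using pe_notE by (auto simp: P_def)

lemma attach_st: "attach k (E,c,m) = (E \<union> P, c', m+4)"
  by (simp add: attach_eq P_def c'_def)

lemma Xe_P: "Xe c k m x \<subseteq> P" by (auto simp: Xe_def P_def)

lemma cinv': "cinv (E \<union> P, c', m+4)"
proof -
  have a: "\<forall>e\<in>E \<union> P. \<exists>a b. a \<noteq> b \<and> e = {a,b}" using E2 pe_two by (auto simp: P_def)
  have b: "\<forall>e\<in>E \<union> P. \<forall>v\<in>e. v < m + 4"
  proof (intro ballI)
    fix e v assume "e \<in> E \<union> P" "v \<in> e"
    from `e \<in> E \<union> P` show "v < m + 4"
    proof (rule UnE)
      assume "e \<in> E" then show ?thesis using Ev `v \<in> e` by fastforce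
    next
      assume "e \<in> P" then obtain i where "i < 5" "e = pe c k m i" by (auto simp: P_def)
      then show ?thesis using pe_range[of v i] `v \<in> e` am by auto
    qed
  qed
  have d: "distinct c'" using am by (auto simp: c'_def)
  have e: "\<forall>i<6. c'!i < m+4" using am by (auto simp: c'_def less_Suc_eq numeral_eq_Suc)
  have f: "\<forall>i<6. {c'!i, c'!(Suc i mod 6)} \<in> E \<union> P"
  proof (intro allI impI)
    fix i :: nat assume "i < 6"
    show "{c'!i, c'!(Suc i mod 6)} \<in> E \<union> P"
    proof (cases "i = 0")
      case True
      have "{c!k, c!(Suc k mod 6)} \<in> E" using cyc[of k] k4 by simp
      then have "{c!k, c!Suc k} \<in> E" using k4 by simp
      then show ?thesis using True k4 by (simp add: c'_def insert_commute)
    next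
      case False
      then have "{c'!i, c'!(Suc i mod 6)} \<in> freeE c'" using `i<6` unfolding freeE_def by blast
      then show ?thesis using freeE_c' by auto
    qed
  qed
  have g: "\<forall>e\<in>E \<union> P. \<forall>j. 2 \<le> j \<and> j < 6 \<and> c'!j \<in> e \<longrightarrow> e \<in> freeE c'"
  proof (intro ballI allI impI)
    fix e j assume "e \<in> E \<union> P" "2 \<le> j \<and> j < 6 \<and> c'!j \<in> e"
    moreover have "c'!j \<ge> m" using `2 \<le> j \<and> j < 6 \<and> c'!j \<in> e` by (auto simp: c'_def less_Suc_eq numeral_eq_Suc)
    ultimately show "e \<in> freeE c'" using Ev freeE_c' by fastforce
  qed
  show ?thesis using a b d e f g finE by (simp add: cinv_def c'_def P_def)
qed


end


context stp begin

lemma bits_nth: "i < 6 \<Longrightarrow> bits c M ! i = (c!i \<in> \<Union>M)"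
  by (simp add: bits_def)

lemma UM: "M \<subseteq> E \<Longrightarrow> v \<in> \<Union>M \<Longrightarrow> v < m"
  using Ev by blast

lemma mem_Xe: "v \<in> \<Union>(Xe c k m x) \<longleftrightarrow> (\<exists>i<5. x!i \<and> v \<in> pe c k m i)"
  by (auto simp: Xe_def)

lemma pe_in_Xe: "i < 5 \<Longrightarrow> pe c k m i \<in> Xe c k m x \<longleftrightarrow> x!i"
  using pe_inj by (auto simp: Xe_def)

lemma new_cov: assumes "M \<subseteq> E" "t < 4"
  shows "m + t \<in> \<Union>(M \<union> Xe c k m x) \<longleftrightarrow> x!t \<or> x!Suc t"
proof -
  have "m + t \<notin> \<Union>M" using UM[OF assms(1)] by fastforce
  moreover have "(\<exists>i<5. x!i \<and> m + t \<in> pe c k m i) \<longleftrightarrow> x!t \<or> x!Suc t"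
    proof
    assume "\<exists>i<5. x!i \<and> m + t \<in> pe c k m i"
    then show "x!t \<or> x!Suc t" using pe_new[OF assms(2)] by auto
  next
    assume "x!t \<or> x!Suc t"
    then show "\<exists>i<5. x!i \<and> m + t \<in> pe c k m i"
    proof
      assume "x!t" then show ?thesis using pe_new[OF assms(2), of t] assms(2) by (intro exI[of _ t]) auto
    next
      assume "x!Suc t" then show ?thesis using pe_new[OF assms(2), of "Suc t"] assms(2) by (intro exI[of _ "Suc t"]) auto
    qed
  qed
  ultimately show ?thesis using mem_Xe by auto
qed

lemma old_cov: assumes "M \<subseteq> E"
  shows "c!k \<in> \<Union>(M \<union> Xe c k m x) \<longleftrightarrow> c!k \<in> \<Union>M \<or> x!0"
    and "c!Suc k \<in> \<Union>(M \<union> Xe c k m x) \<longleftrightarrow> c!Suc k \<in> \<Union>M \<or> x!4"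
proof -
  have "(\<exists>i<5. x!i \<and> c!k \<in> pe c k m i) \<longleftrightarrow> x!0"
  proof
    assume "\<exists>i<5. x!i \<and> c!k \<in> pe c k m i" then show "x!0" using pe_old[OF am(1)] am by auto
  next
    assume "x!0" then show "\<exists>i<5. x!i \<and> c!k \<in> pe c k m i" by (intro exI[of _ 0]) (simp add: pe_def)
  qed
  then show "c!k \<in> \<Union>(M \<union> Xe c k m x) \<longleftrightarrow> c!k \<in> \<Union>M \<or> x!0" using mem_Xe by auto
  have "(\<exists>i<5. x!i \<and> c!Suc k \<in> pe c k m i) \<longleftrightarrow> x!4"
  proof
    assume "\<exists>i<5. x!i \<and> c!Suc k \<in> pe c k m i" then show "x!4" using pe_old[OF am(2)] am by auto
  next
    assume "x!4" then show "\<exists>i<5. x!i \<and> c!Suc k \<in> pe c k m i" by (intro exI[of _ 4]) (simp add: pe_def)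
  qed
  then show "c!Suc k \<in> \<Union>(M \<union> Xe c k m x) \<longleftrightarrow> c!Suc k \<in> \<Union>M \<or> x!4" using mem_Xe by auto
qed

lemma bits_fwd: assumes "M \<subseteq> E"
  shows "bits c' (M \<union> Xe c k m x) = nxt k (bits c M) x"
proof -
  have h0: "(m \<in> \<Union>(M \<union> Xe c k m x)) = (x!0 \<or> x!1)" using new_cov[OF assms, of 0] by simp
  have h1: "(m+1 \<in> \<Union>(M \<union> Xe c k m x)) = (x!1 \<or> x!2)" using new_cov[OF assms, of 1] by (simp add: numeral_2_eq_2)
  have h2: "(m+2 \<in> \<Union>(M \<union> Xe c k m x)) = (x!2 \<or> x!3)" using new_cov[OF assms, of 2] by simp
  have h3: "(m+3 \<in> \<Union>(M \<union> Xe c k m x)) = (x!3 \<or> x!4)" using new_cov[OF assms, of 3] by simp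
  have b1: "bits c M ! k = (c!k \<in> \<Union>M)" "bits c M ! Suc k = (c!Suc k \<in> \<Union>M)"
    using bits_nth k4 by auto
  show ?thesis unfolding nxt_def b1 unfolding bits_def map6 c'_def
    using h0 h1 h2 h3 old_cov[OF assms] by simp
qed

lemma cross: assumes "M \<subseteq> E" "ok k (bits c M) x" "e \<in> M" "i < 5" "x!i"
  shows "e \<inter> pe c k m i = {}"
proof (rule ccontr)
  assume "e \<inter> pe c k m i \<noteq> {}"
  then obtain w where w: "w \<in> e" "w \<in> pe c k m i" by blast
  have "w < m" using w assms Ev by blast
  then have "(i = 0 \<and> w = c!k) \<or> (i = 4 \<and> w = c!Suc k)" using pe_old w assms by blast
  moreover have "bits c M ! k = (c!k \<in> \<Union>M)" "bits c M ! Suc k = (c!Suc k \<in> \<Union>M)"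
    using bits_nth k4 by auto
  ultimately show False using assms w unfolding ok_def by auto
qed

lemma inner: assumes "x \<in> set Xs" "i < 5" "j < 5" "x!i" "x!j" "i \<noteq> j"
  shows "pe c k m i \<inter> pe c k m j = {}"
proof -
  have "j \<noteq> Suc i" using Xs_nadj[OF assms(1), of i] assms by auto
  moreover have "i \<noteq> Suc j" using Xs_nadj[OF assms(1), of j] assms by auto
  ultimately show ?thesis using pe_disj assms by blast
qed

lemma okc_cov: assumes "M \<subseteq> E" "j < 6" "okc k (bits c M) x j"
  shows "c!j \<in> \<Union>(M \<union> Xe c k m x)"
proof -
  have "bits c M ! j \<or> (x!0 \<and> j = k) \<or> (x!4 \<and> j = Suc k)" using assms(3) by (simp add: okc_def)
  then show ?thesis
  proof (elim disjE)
    assume "bits c M ! j" then show ?thesis using bits_nth[OF assms(2)] by auto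
  next
    assume "x!0 \<and> j = k" then show ?thesis using old_cov(1)[OF assms(1), of x] by simp
  next
    assume "x!4 \<and> j = Suc k" then show ?thesis using old_cov(2)[OF assms(1), of x] by simp
  qed
qed

lemma fwd: assumes v: "valid (E,c,m) M" and x: "x \<in> set Xs" and o: "ok k (bits c M) x"
  shows "valid (E \<union> P, c', m+4) (M \<union> Xe c k m x)"
proof -
  have ME: "M \<subseteq> E" and Mm: "\<forall>e\<in>M. \<forall>f\<in>M. e \<noteq> f \<longrightarrow> e \<inter> f = {}"
    and Mc: "\<forall>e\<in>E. e \<notin> freeE c \<longrightarrow> e \<inter> \<Union>M \<noteq> {}"
    using v by (auto simp: valid_def is_matching_def)
  have match: "is_matching (E \<union> P) (M \<union> Xe c k m x)"
    unfolding is_matching_def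
  proof (intro conjI ballI impI)
    show "M \<union> Xe c k m x \<subseteq> E \<union> P" using ME Xe_P by auto
  next
    fix e f assume e: "e \<in> M \<union> Xe c k m x" and f: "f \<in> M \<union> Xe c k m x" and ef: "e \<noteq> f"
    show "e \<inter> f = {}"
    proof (cases "e \<in> M")
      case eM: True
      show ?thesis
      proof (cases "f \<in> M")
        case True then show ?thesis using Mm eM ef by blast
      next
        case False then obtain j where "j < 5" "x!j" "f = pe c k m j" using f by (auto simp: Xe_def)
        then show ?thesis using cross[OF ME o eM] by blast
      qed
    next
      case False
      then obtain i where i: "i < 5" "x!i" "e = pe c k m i" using e by (auto simp: Xe_def)
      show ?thesis
      proof (cases "f \<in> M")
        case True then show ?thesis using cross[OF ME o True i(1,2)] i by blast
      next
        case False then obtain j where "j < 5" "x!j" "f = pe c k m j" using f by (auto simp: Xe_def)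
        then show ?thesis using inner[OF x i(1) _ i(2)] i ef by blast
      qed
    qed
  qed
  have cov: "\<forall>e\<in>E \<union> P. e \<notin> freeE c' \<longrightarrow> e \<inter> \<Union>(M \<union> Xe c k m x) \<noteq> {}"
  proof (intro ballI impI)
    fix e assume e: "e \<in> E \<union> P" "e \<notin> freeE c'"
    then have eE: "e \<in> E" using freeE_c' by auto
    show "e \<inter> \<Union>(M \<union> Xe c k m x) \<noteq> {}"
    proof (cases "e \<in> freeE c")
      case False then show ?thesis using Mc eE by auto
    next
      case True
      then obtain i where i: "0 < i" "i < 6" "e = {c!i, c!(Suc i mod 6)}" unfolding freeE_def by blast
      have "okc k (bits c M) x i \<or> okc k (bits c M) x (Suc i mod 6)" using ok_cyc[OF o i(2)] .
      then have "c!i \<in> \<Union>(M \<union> Xe c k m x) \<or> c!(Suc i mod 6) \<in> \<Union>(M \<union> Xe c k m x)"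
        using okc_cov[OF ME] i by (metis mod_less_divisor zero_less_numeral)
      then show ?thesis using i by blast
    qed
  qed
  show ?thesis using match cov by (simp add: valid_def)
qed

lemma bwd: assumes v': "valid (E \<union> P, c', m+4) M'"
  defines "M \<equiv> M' \<inter> E" and "x \<equiv> map (\<lambda>i. pe c k m i \<in> M') [0..<5]"
  shows "M' = M \<union> Xe c k m x" "valid (E,c,m) M" "x \<in> set Xs" "ok k (bits c M) x"
proof -
  have M'EP: "M' \<subseteq> E \<union> P" and M'm: "\<forall>e\<in>M'. \<forall>f\<in>M'. e \<noteq> f \<longrightarrow> e \<inter> f = {}"
    and M'c: "\<forall>e\<in>E \<union> P. e \<notin> freeE c' \<longrightarrow> e \<inter> \<Union>M' \<noteq> {}"
    using v' by (auto simp: valid_def is_matching_def)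
  have xi: "\<And>i. i < 5 \<Longrightarrow> x!i = (pe c k m i \<in> M')" by (simp add: x_def)
  have lenx: "length x = 5" by (simp add: x_def)
  show eq: "M' = M \<union> Xe c k m x"
  proof
    show "M' \<subseteq> M \<union> Xe c k m x"
    proof
      fix f assume "f \<in> M'"
      show "f \<in> M \<union> Xe c k m x"
      proof (cases "f \<in> E")
        case True then show ?thesis using `f \<in> M'` by (simp add: M_def)
      next
        case False
        then obtain i where "i < 5" "f = pe c k m i" using M'EP `f \<in> M'` by (auto simp: P_def)
        then show ?thesis using xi `f \<in> M'` by (auto simp: Xe_def)
      qed
    qed
  next
    show "M \<union> Xe c k m x \<subseteq> M'" using xi by (auto simp: M_def Xe_def)
  qed
  have ME: "M \<subseteq> E" by (simp add: M_def)
  show "valid (E,c,m) M"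
    unfolding valid_def is_matching_def fst_conv snd_conv
  proof (intro conjI ballI impI)
    show "M \<subseteq> E" by (rule ME)
  next
    fix e f assume "e \<in> M" "f \<in> M" "e \<noteq> f" then show "e \<inter> f = {}" using M'm by (auto simp: M_def)
  next
    fix e assume eE: "e \<in> E" and nf: "e \<notin> freeE c"
    have "e \<notin> freeE c'" using eE P_E freeE_c' by auto
    then obtain w f where w: "w \<in> e" "f \<in> M'" "w \<in> f" using M'c eE by blast
    show "e \<inter> \<Union>M \<noteq> {}"
    proof (cases "f \<in> E")
      case True then show ?thesis using w by (auto simp: M_def)
    next
      case False
      then obtain i where i: "i < 5" "f = pe c k m i" using M'EP w by (auto simp: P_def)
      have "w < m" using Ev eE w by blast
      then have "w = c!k \<or> w = c!Suc k" using pe_old i w by blast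
      then have "e \<in> freeE c" using Eloc[OF eE, of k] Eloc[OF eE, of "Suc k"] k2 k4 w by auto
      then show ?thesis using nf by blast
    qed
  qed
  show "x \<in> set Xs"
  proof (rule in_Xs[OF lenx], intro allI impI notI)
    fix i :: nat assume "i < 4" "x!i \<and> x!Suc i"
    then have "pe c k m i \<in> M'" "pe c k m (Suc i) \<in> M'" using xi by auto
    moreover have "pe c k m i \<noteq> pe c k m (Suc i)" using pe_inj[of i "Suc i"] `i<4` by auto
    ultimately show False using M'm pe_adj[OF `i<4`] by blast
  qed
  show "ok k (bits c M) x"
  proof (rule ok_intro)
    have b1: "bits c M ! k = (c!k \<in> \<Union>M)" "bits c M ! Suc k = (c!Suc k \<in> \<Union>M)"
      using bits_nth k4 by auto
    show "x!0 \<longrightarrow> \<not> bits c M ! k"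
    proof (intro impI notI)
      assume "x!0" "bits c M ! k"
      then obtain f where f: "f \<in> M" "c!k \<in> f" using b1 by auto
      have p: "pe c k m 0 \<in> M'" using xi `x!0` by auto
      have "f \<noteq> pe c k m 0" using f pe_notE ME by auto
      moreover have "c!k \<in> pe c k m 0" by (simp add: pe_def)
      ultimately show False using M'm f p by (auto simp: M_def)
    qed
    show "x!4 \<longrightarrow> \<not> bits c M ! Suc k"
    proof (intro impI notI)
      assume "x!4" "bits c M ! Suc k"
      then obtain f where f: "f \<in> M" "c!Suc k \<in> f" using b1 by auto
      have p: "pe c k m 4 \<in> M'" using xi `x!4` by auto
      have "f \<noteq> pe c k m 4" using f pe_notE ME by auto
      moreover have "c!Suc k \<in> pe c k m 4" by (simp add: pe_def)
      ultimately show False using M'm f p by (auto simp: M_def)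
    qed
    show "\<forall>i<6. okc k (bits c M) x i \<or> okc k (bits c M) x (Suc i mod 6)"
    proof (intro allI impI)
      fix i :: nat assume i6: "i < 6"
      have ce: "{c!i, c!(Suc i mod 6)} \<in> E" using cyc[OF i6] .
      have "{c!i, c!(Suc i mod 6)} \<notin> freeE c'" using ce P_E freeE_c' by auto
      then obtain w f where w: "w \<in> {c!i, c!(Suc i mod 6)}" "f \<in> M'" "w \<in> f" using M'c ce by blast
      obtain j where j: "j < 6" "w = c!j" "j = i \<or> j = Suc i mod 6"
      proof (cases "w = c!i")
        case True then show ?thesis using that i6 by blast
      next
        case False then have "w = c!(Suc i mod 6)" using w(1) by blast
        then show ?thesis using that[of "Suc i mod 6"] by simp
      qed
      have "okc k (bits c M) x j"
      proof (cases "f \<in> E")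
        case True then have "c!j \<in> \<Union>M" using w j by (auto simp: M_def)
        then show ?thesis using bits_nth j by (simp add: okc_def)
      next
        case False
        then obtain t where t: "t < 5" "f = pe c k m t" using M'EP w by (auto simp: P_def)
        have "w < m" using cm j by auto
        then have "(t = 0 \<and> w = c!k) \<or> (t = 4 \<and> w = c!Suc k)" using pe_old t w by blast
        moreover have "x!t" using xi t w by auto
        moreover have "c!j = c!k \<Longrightarrow> j = k" "c!j = c!Suc k \<Longrightarrow> j = Suc k"
          using cinj j k4 by auto
        ultimately show ?thesis using j by (auto simp: okc_def)
      qed
      then show "okc k (bits c M) x i \<or> okc k (bits c M) x (Suc i mod 6)" using j by auto
    qed
  qed
qed

lemma inj_g: assumes "M1 \<subseteq> E" "M2 \<subseteq> E" "length x1 = 5" "length x2 = 5"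
  "M1 \<union> Xe c k m x1 = M2 \<union> Xe c k m x2" shows "M1 = M2" "x1 = x2"
proof -
  have "M1 = (M1 \<union> Xe c k m x1) \<inter> E" using assms(1) Xe_P P_E by blast
  moreover have "M2 = (M2 \<union> Xe c k m x2) \<inter> E" using assms(2) Xe_P P_E by blast
  ultimately show "M1 = M2" using assms(5) by simp
  have "\<And>i. i < 5 \<Longrightarrow> x1!i = x2!i"
  proof -
    fix i :: nat assume "i < 5"
    have "pe c k m i \<notin> M1" "pe c k m i \<notin> M2" using pe_notE `i<5` assms(1,2) by auto
    then show "x1!i = x2!i" using pe_in_Xe[OF `i<5`] assms(5) by blast
  qed
  then show "x1 = x2" using assms(3,4) by (simp add: nth_equalityI)
qed

lemma finV: "finite {M. valid (E,c,m) M}"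
proof -
  have "{M. valid (E,c,m) M} \<subseteq> Pow E" by (auto simp: valid_def is_matching_def)
  then show ?thesis using finE finite_subset by blast
qed

lemma transfer: "Fs (attach k (E,c,m)) w = Fs (E,c,m) (lift k w)"
proof -
  define Sig where "Sig = Sigma {M. valid (E,c,m) M} (\<lambda>M. {x \<in> set Xs. ok k (bits c M) x})"
  define g where "g = (\<lambda>p. fst p \<union> Xe c k m (snd p))"
  have V': "{M'. valid (E \<union> P, c', m+4) M'} = g ` Sig"
  proof
    show "{M'. valid (E \<union> P, c', m+4) M'} \<subseteq> g ` Sig"
    proof
      fix M' assume "M' \<in> {M'. valid (E \<union> P, c', m+4) M'}"
      then have v: "valid (E \<union> P, c', m+4) M'" by simp
      let ?M = "M' \<inter> E" let ?x = "map (\<lambda>i. pe c k m i \<in> M') [0..<5]"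
      have "(?M, ?x) \<in> Sig" using bwd[OF v] by (simp add: Sig_def)
      moreover have "M' = g (?M, ?x)" using bwd(1)[OF v] by (simp add: g_def)
      ultimately show "M' \<in> g ` Sig" by blast
    qed
  next
    show "g ` Sig \<subseteq> {M'. valid (E \<union> P, c', m+4) M'}"
      using fwd by (auto simp: Sig_def g_def)
  qed
  have inj: "inj_on g Sig"
  proof (rule inj_onI)
    fix p q assume "p \<in> Sig" "q \<in> Sig" "g p = g q"
    then show "p = q" using inj_g[of "fst p" "fst q" "snd p" "snd q"]
      by (auto simp: Sig_def g_def valid_def is_matching_def Xs_len prod_eq_iff)
  qed
  have "Fs (attach k (E,c,m)) w = (\<Sum>M'\<in>g ` Sig. w (bits c' M'))"
    by (simp add: Fs_def attach_st V')
  also have "... = (\<Sum>p\<in>Sig. w (bits c' (g p)))" by (simp add: sum.reindex[OF inj])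
  also have "... = (\<Sum>p\<in>Sig. w (nxt k (bits c (fst p)) (snd p)))"
  proof (rule sum.cong[OF refl])
    fix p assume "p \<in> Sig"
    then have "fst p \<subseteq> E" by (auto simp: Sig_def valid_def is_matching_def)
    then show "w (bits c' (g p)) = w (nxt k (bits c (fst p)) (snd p))" by (simp add: g_def bits_fwd)
  qed
  also have "... = (\<Sum>(M,x)\<in>Sig. w (nxt k (bits c M) x))" by (simp add: case_prod_unfold)
  also have "... = (\<Sum>M\<in>{M. valid (E,c,m) M}. \<Sum>x\<in>{x \<in> set Xs. ok k (bits c M) x}. w (nxt k (bits c M) x))"
    unfolding Sig_def by (rule sum.Sigma[symmetric]) (auto simp: finV)
  also have "... = (\<Sum>M\<in>{M. valid (E,c,m) M}. lift k w (bits c M))"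
  proof (rule sum.cong[OF refl])
    fix M
    have "(\<Sum>x\<in>{x \<in> set Xs. ok k (bits c M) x}. w (nxt k (bits c M) x))
        = (\<Sum>x\<in>set Xs. if ok k (bits c M) x then w (nxt k (bits c M) x) else 0)"
      by (simp add: sum.inter_filter)
    also have "... = lift k w (bits c M)"
      by (simp add: lift_def sum_list_distinct_conv_sum_set[OF Xs_distinct])
    finally show "(\<Sum>x\<in>{x \<in> set Xs. ok k (bits c M) x}. w (nxt k (bits c M) x)) = lift k w (bits c M)" .
  qed
  also have "... = Fs (E,c,m) (lift k w)" by (simp add: Fs_def)
  finally show ?thesis .
qed

end


fun idx :: "bool list \<Rightarrow> nat" where
  "idx [] = 0"
| "idx (x # xs) = (if x then 1 else 0) + 2 * idx xs"

definition tw :: "int list \<Rightarrow> bool list \<Rightarrow> int" where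
  "tw T b = T ! idx b"

definition allb :: "bool list list" where
  "allb = [[False,False,False,False,False,False],[True,False,False,False,False,False],[False,True,False,False,False,False],[True,True,False,False,False,False],[False,False,True,False,False,False],[True,False,True,False,False,False],[False,True,True,False,False,False],[True,True,True,False,False,False],[False,False,False,True,False,False],[True,False,False,True,False,False],[False,True,False,True,False,False],[True,True,False,True,False,False],[False,False,True,True,False,False],[True,False,True,True,False,False],[False,True,True,True,False,False],[True,True,True,True,False,False],[False,False,False,False,True,False],[True,False,False,False,True,False],[False,True,False,False,True,False],[True,True,False,False,True,False],[False,False,True,False,True,False],[True,False,True,False,True,False],[False,True,True,False,True,False],[True,True,True,False,True,False],[False,False,False,True,True,False],[True,False,False,True,True,False],[False,True,False,True,True,False],[True,True,False,True,True,False],[False,False,True,True,True,False],[True,False,True,True,True,False],[False,True,True,True,True,False],[True,True,True,True,True,False],[False,False,False,False,False,True],[True,False,False,False,False,True],[False,True,False,False,False,True],[True,True,False,False,False,True],[False,False,True,False,False,True],[True,False,True,False,False,True],[False,True,True,False,False,True],[True,True,True,False,False,True],[False,False,False,True,False,True],[True,False,False,True,False,True],[False,True,False,True,False,True],[True,True,False,True,False,True],[False,False,True,True,False,True],[True,False,True,True,False,True],[False,True,True,True,False,True],[True,True,True,True,False,True],[False,False,False,False,True,True],[True,False,False,False,True,True],[False,True,False,False,True,True],[True,True,False,False,True,True],[False,False,True,False,True,True],[True,False,True,False,True,True],[False,True,True,False,True,True],[True,True,True,False,True,True],[False,False,False,True,True,True],[True,False,False,True,True,True],[False,True,False,Tr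ue,True,True],[True,True,False,True,True,True],[False,False,True,True,True,True],[True,False,True,True,True,True],[False,True,True,True,True,True],[True,True,True,True,True,True]]"

definition liftT :: "nat \<Rightarrow> int list \<Rightarrow> int list" where
  "liftT k T = map (lift k (tw T)) allb"

definition uu :: "bool list \<Rightarrow> int" where
  "uu b = (if (b!1 \<or> b!2) \<and> (b!2 \<or> b!3) \<and> (b!3 \<or> b!4) \<and> (b!4 \<or> b!5) \<and> (b!5 \<or> b!0) then 1 else 0)"





lemma transfer_s: assumes "cinv s" "2 \<le> k" "k \<le> 4"
  shows "Fs (attach k s) w = Fs s (lift k w)" "cinv (attach k s)"
proof -
  obtain E c m where s: "s = (E,c,m)" by (cases s) auto
  interpret stp E c m k using assms s by unfold_locales auto
  show "Fs (attach k s) w = Fs s (lift k w)" using transfer s by simp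
  show "cinv (attach k s)" using cinv' attach_st s by simp
qed

lemma maxm: assumes "\<forall>e\<in>E. e \<noteq> {}"
  shows "is_maximal_matching E M \<longleftrightarrow> is_matching E M \<and> (\<forall>e\<in>E. e \<inter> \<Union>M \<noteq> {})"
proof
  assume mm: "is_maximal_matching E M"
  then have m: "is_matching E M" by (simp add: is_maximal_matching_def)
  show "is_matching E M \<and> (\<forall>e\<in>E. e \<inter> \<Union>M \<noteq> {})"
  proof (rule conjI[OF m], rule ballI, rule notI)
    fix e assume e: "e \<in> E" "e \<inter> \<Union>M = {}"
    have "e \<noteq> {}" using e assms by blast
    then have "e \<notin> M" using e by blast
    moreover have "is_matching E (insert e M)" unfolding is_matching_def
    proof (intro conjI ballI impI)
      show "insert e M \<subseteq> E" using m e by (auto simp: is_matching_def)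
    next
      fix a b assume ab: "a \<in> insert e M" "b \<in> insert e M" "a \<noteq> b"
      show "a \<inter> b = {}"
      proof (cases "a = e")
        case True then have "b \<in> M" using ab by auto
        then show ?thesis using True e by blast
      next
        case False then have aM: "a \<in> M" using ab by auto
        show ?thesis
        proof (cases "b = e")
          case True then show ?thesis using aM e by blast
        next
          case False then have "b \<in> M" using ab by auto
          then show ?thesis using aM ab m by (auto simp: is_matching_def)
        qed
      qed
    qed
    ultimately show False using mm unfolding is_maximal_matching_def by blast
  qed
next
  assume a: "is_matching E M \<and> (\<forall>e\<in>E. e \<inter> \<Union>M \<noteq> {})"
  show "is_maximal_matching E M" unfolding is_maximal_matching_def
  proof (rule conjI)
    show "is_matching E M" using a by simp
    show "\<not> (\<exists>M'. is_matching E M' \<and> M \<subset> M')"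
    proof
      assume "\<exists>M'. is_matching E M' \<and> M \<subset> M'"
      then obtain M' e where M': "is_matching E M'" "M \<subset> M'" "e \<in> M'" "e \<notin> M" by blast
      then have "e \<in> E" by (auto simp: is_matching_def)
      then obtain f where f: "f \<in> M" "e \<inter> f \<noteq> {}" using a by blast
      then have "f \<in> M'" "f \<noteq> e" using M' by auto
      then show False using M'(1) M'(3) f(2) unfolding is_matching_def by blast
    qed
  qed
qed

lemma Psi_pos: assumes "finite E" shows "Psi E \<ge> 1"
proof -
  have fin: "finite {M. is_matching E M}"
    by (rule finite_subset[of _ "Pow E"]) (auto simp: is_matching_def assms)
  have "{} \<in> {M. is_matching E M}" by (simp add: is_matching_def)
  then have "{M. is_matching E M} \<noteq> {}" by blast
  then obtain M where M: "M \<in> {M. is_matching E M}" "\<forall>b\<in>{M. is_matching E M}. M \<le> b \<longrightarrow> M = b"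
    using finite_has_maximal[OF fin] by blast
  then have "is_maximal_matching E M" unfolding is_maximal_matching_def by auto
  moreover have "finite {M. is_maximal_matching E M}"
    by (rule finite_subset[OF _ fin]) (auto simp: is_maximal_matching_def)
  ultimately have "card {M. is_maximal_matching E M} > 0" by (auto simp: card_gt_0_iff)
  then show ?thesis unfolding Psi_def by simp
qed

lemma freeE_eq2: "freeE l = {{l!1,l!2},{l!2,l!3},{l!3,l!4},{l!4,l!5},{l!5,l!0}}"
proof -
  have m: "Suc 1 mod 6 = (2::nat)" "Suc 2 mod 6 = (3::nat)" "Suc 3 mod 6 = (4::nat)" "Suc 4 mod 6 = (5::nat)" "Suc 5 mod 6 = (0::nat)" by simp_all
  show ?thesis unfolding freeE_eq image_insert image_empty m by (rule refl)
qed

lemma uu_cond: assumes "length c = 6"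
  shows "uu (bits c M) = (if \<forall>e\<in>freeE c. e \<inter> \<Union>M \<noteq> {} then 1 else 0)"
  unfolding uu_def freeE_eq2 bits_def map6 by simp

lemma Psi_Fs: assumes "cinv s" shows "int (Psi (fst s)) = Fs s uu"
proof -
  obtain E c m where s: "s = (E,c,m)" by (cases s) auto
  have finE: "finite E" and E2: "\<forall>e\<in>E. \<exists>a b. a \<noteq> b \<and> e = {a,b}" and lc: "length c = 6"
    and cyc: "\<forall>i<6. {c!i, c!(Suc i mod 6)} \<in> E"
    using assms s by (auto simp: cinv_def)
  have ne: "\<forall>e\<in>E. e \<noteq> {}" using E2 by blast
  have fsub: "freeE c \<subseteq> E" using cyc unfolding freeE_def by auto
  have finV: "finite {M. valid s M}"
    by (rule finite_subset[of _ "Pow E"]) (auto simp: valid_def is_matching_def s finE)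
  have eq: "{M. valid (E,c,m) M \<and> (\<forall>e\<in>freeE c. e \<inter> \<Union>M \<noteq> {})} = Collect (is_maximal_matching E)"
    unfolding maxm[OF ne] valid_def fst_conv snd_conv using fsub by blast
  have "Fs s uu = (\<Sum>M\<in>{M. valid s M}. if \<forall>e\<in>freeE c. e \<inter> \<Union>M \<noteq> {} then 1 else 0)"
    unfolding Fs_def using uu_cond[OF lc] s by simp
  also have "... = int (card {M \<in> {M. valid s M}. \<forall>e\<in>freeE c. e \<inter> \<Union>M \<noteq> {}})"
    by (simp add: sum.inter_filter[OF finV, symmetric])
  also have "... = int (Psi (fst s))" using eq by (simp add: Psi_def s)
  finally show ?thesis by simp
qed

definition SS :: "(nat \<Rightarrow> nat) \<Rightarrow> nat \<Rightarrow> nat set set \<times> nat list \<times> nat" where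
  "SS kf j = foldl (\<lambda>s k. attach k s) hex0 (map kf [0..<j])"

lemma SS_Suc: "SS kf (Suc j) = attach (kf j) (SS kf j)" by (simp add: SS_def)

lemma all6: "(\<forall>i<6. P i) \<longleftrightarrow> P 0 \<and> P 1 \<and> P 2 \<and> P 3 \<and> P 4 \<and> P (5::nat)"
proof
  assume "P 0 \<and> P 1 \<and> P 2 \<and> P 3 \<and> P 4 \<and> P (5::nat)"
  moreover have "\<And>i::nat. i < 6 \<Longrightarrow> i = 0 \<or> i = 1 \<or> i = 2 \<or> i = 3 \<or> i = 4 \<or> i = 5" by linarith
  ultimately show "\<forall>i<6. P i" by metis
qed simp

lemma cinv_hex0: "cinv hex0"
proof -
  let ?c = "[0,1,2,3,4,5::nat]"
  let ?E = "{{0,1},{1,2},{2,3},{3,4},{4,5},{5,0::nat}}"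
  have fr: "freeE ?c = {{1,2},{2,3},{3,4},{4,5},{5,0}}" by (simp add: freeE_eq)
  have a: "\<forall>i<6. {?c!i, ?c!(Suc i mod 6)} \<in> ?E" unfolding all6 by simp
  have b: "\<forall>i<6. ?c!i < 6" unfolding all6 by simp
  have c: "\<forall>e\<in>?E. \<forall>j. 2 \<le> j \<and> j < 6 \<and> ?c!j \<in> e \<longrightarrow> e \<in> freeE ?c"
  proof (intro ballI allI impI)
    fix e j assume e: "e \<in> ?E" and j: "2 \<le> j \<and> j < 6 \<and> ?c!j \<in> e"
    have cj: "?c!j = j" using j by (simp add: nth_Cons' )
    have "j \<in> e" using conjunct2[OF conjunct2[OF j]] unfolding cj .
    then have "e \<noteq> {0,1}" using j by auto
    then show "e \<in> freeE ?c" using e unfolding fr by blast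
  qed
  have two: "\<And>a b::nat. a \<noteq> b \<Longrightarrow> \<exists>x y. x \<noteq> y \<and> {a,b} = {x,y}" by blast
  have d: "\<forall>e\<in>?E. \<exists>a b. a \<noteq> b \<and> e = {a,b}" by (simp add: two)
  have f: "\<forall>e\<in>?E. \<forall>v\<in>e. v < 6" by simp
  have g: "finite ?E" "length ?c = 6" "distinct ?c" by simp_all
  show ?thesis unfolding cinv_def hex0_def prod.case using a b c d f g by (intro conjI)
qed

lemma cinv_SS: assumes "\<forall>i. 2 \<le> kf i \<and> kf i \<le> 4" shows "cinv (SS kf j)"
  by (induction j) (auto simp: SS_Suc cinv_hex0 transfer_s(2) assms, simp add: SS_def cinv_hex0)

fun iterL :: "(nat \<Rightarrow> nat) \<Rightarrow> nat \<Rightarrow> nat \<Rightarrow> (bool list \<Rightarrow> int) \<Rightarrow> bool list \<Rightarrow> int" where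
  "iterL kf m 0 w = w"
| "iterL kf m (Suc j) w = lift (kf m) (iterL kf (Suc m) j w)"

lemma Fs_iter: assumes "\<forall>i. 2 \<le> kf i \<and> kf i \<le> 4"
  shows "Fs (SS kf (m + j)) w = Fs (SS kf m) (iterL kf m j w)"
proof (induction j arbitrary: m)
  case 0 then show ?case by simp
next
  case (Suc j)
  have "Fs (SS kf (m + Suc j)) w = Fs (SS kf (Suc m + j)) w" by simp
  also have "... = Fs (SS kf (Suc m)) (iterL kf (Suc m) j w)" by (rule Suc.IH)
  also have "... = Fs (SS kf m) (iterL kf m (Suc j) w)"
    using transfer_s(1)[OF cinv_SS[OF assms] ] assms by (simp add: SS_Suc)
  finally show ?case .
qed

lemma Psi_SS: assumes "\<forall>i. 2 \<le> kf i \<and> kf i \<le> 4"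
  shows "int (Psi (chain_graph (map kf [0..<j]))) = Fs (SS kf j) uu"
  using Psi_Fs[OF cinv_SS[OF assms, of j]] by (simp add: chain_graph_def SS_def)

lemma Fs_cong: assumes "\<forall>b. length b = 6 \<longrightarrow> w1 b = w2 b" shows "Fs s w1 = Fs s w2"
  unfolding Fs_def using assms by (intro sum.cong) (auto simp: bits_def)

lemma Fs_add: "Fs s (\<lambda>b. f b + g b) = Fs s f + Fs s g"
  by (simp add: Fs_def sum.distrib)

lemma Fs_mult: "Fs s (\<lambda>b. a * f b) = a * Fs s f"
  by (simp add: Fs_def sum_distrib_left)

lemma lift_cong: assumes "\<forall>b. length b = 6 \<longrightarrow> w1 b = w2 b" shows "lift k w1 b = lift k w2 b"
  unfolding lift_def using assms by (intro arg_cong[where f=sum_list] map_cong) (auto simp: nxt_def)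

lemma allb_idx: assumes "length b = 6" shows "idx b < 64" "allb ! idx b = b"
proof -
  obtain a0 a1 a2 a3 a4 a5 where b: "b = [a0,a1,a2,a3,a4,a5]"
    using assms by (auto simp: length_Suc_conv numeral_eq_Suc)
  show "idx b < 64" unfolding b by simp
  show "allb ! idx b = b" unfolding b allb_def
    by (cases a0; cases a1; cases a2; cases a3; cases a4; cases a5; simp)
qed

lemma allb_len: "length allb = 64" by (simp add: allb_def)
lemma allb_set: "length b = 6 \<Longrightarrow> b \<in> set allb"
  using allb_idx[of b] allb_len by (metis nth_mem)

lemma tw_liftT: "length b = 6 \<Longrightarrow> tw (liftT k T) b = lift k (tw T) b"
  using allb_idx[of b] allb_len by (simp add: tw_def liftT_def)

lemma tw_map: "length b = 6 \<Longrightarrow> tw (map f allb) b = f b"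
  using allb_idx[of b] allb_len by (simp add: tw_def)


definition kL :: "nat \<Rightarrow> nat" where "kL = (\<lambda>i. 3)"
definition kH :: "nat \<Rightarrow> nat" where "kH = (\<lambda>i. if i = 0 then 3 else 2)"
definition kZ :: "nat \<Rightarrow> nat" where "kZ = (\<lambda>i. if i = 0 then 3 else if odd i then 2 else 4)"

lemma iter_step: assumes "\<And>b. length b = 6 \<Longrightarrow> iterL kf (Suc m) j w b = tw T b" "kf m = k" "length b = 6"
  shows "iterL kf m (Suc j) w b = tw (liftT k T) b"
proof -
  have "iterL kf m (Suc j) w b = lift k (iterL kf (Suc m) j w) b" using assms(2) by simp
  also have "... = lift k (tw T) b" using assms(1) by (intro lift_cong) auto
  also have "... = tw (liftT k T) b" using tw_liftT[OF assms(3)] by simp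
  finally show ?thesis .
qed
definition "U = [0,0,0,0,0,0,0,0,0,0,0,0,0,0,0,0,0,0,0,0,0,1,0,1,0,0,0,1,0,1,0,1,0,0,0,0,0,0,0,0,0,0,1,1,1,1,1,1,0,0,0,0,1,1,1,1,0,0,1,1,1,1,1,1]"
lemma U_eq: "map uu allb = U" by (simp add: allb_def uu_def U_def)

lemma iter0: "length b = 6 \<Longrightarrow> iterL kf m 0 uu b = tw U b"
  using tw_map[of b uu] by (simp add: U_eq)

definition "L1 = [0,0,0,1,0,2,0,2,0,0,0,2,0,2,0,2,0,0,0,2,0,3,0,3,0,0,0,2,0,2,0,2,0,0,2,2,0,3,3,3,0,0,3,3,0,3,3,3,0,0,2,2,0,3,3,3,0,0,2,2,0,2,2,2]"
definition "L2 = [0,0,0,5,0,8,0,8,0,0,0,7,0,7,0,7,0,0,0,7,0,11,0,11,0,0,0,9,0,9,0,9,0,0,8,8,0,11,11,11,0,0,11,11,0,11,11,11,0,0,7,7,0,11,11,11,0,0,9,9,0,9,9,9]"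
definition "L3 = [0,0,0,20,0,31,0,31,0,0,0,28,0,28,0,28,0,0,0,28,0,44,0,44,0,0,0,37,0,37,0,37,0,0,31,31,0,42,42,42,0,0,44,44,0,44,44,44,0,0,28,28,0,44,44,44,0,0,37,37,0,37,37,37]"
definition "L4 = [0,0,0,79,0,123,0,123,0,0,0,112,0,112,0,112,0,0,0,112,0,177,0,177,0,0,0,150,0,150,0,150,0,0,123,123,0,167,167,167,0,0,177,177,0,177,177,177,0,0,112,112,0,177,177,177,0,0,150,150,0,150,150,150]"
definition "L5 = [0,0,0,317,0,494,0,494,0,0,0,450,0,450,0,450,0,0,0,450,0,712,0,712,0,0,0,603,0,603,0,603,0,0,494,494,0,671,671,671,0,0,712,712,0,712,712,712,0,0,450,450,0,712,712,712,0,0,603,603,0,603,603,603]"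
definition "L6 = [0,0,0,1274,0,1986,0,1986,0,0,0,1809,0,1809,0,1809,0,0,0,1809,0,2862,0,2862,0,0,0,2423,0,2423,0,2423,0,0,1986,1986,0,2698,2698,2698,0,0,2862,2862,0,2862,2862,2862,0,0,1809,1809,0,2862,2862,2862,0,0,2423,2423,0,2423,2423,2423]"
definition "H1 = [0,0,0,0,0,0,0,0,0,0,0,0,0,0,0,0,0,2,0,3,0,3,0,3,0,2,0,3,0,2,0,2,0,1,2,2,0,2,2,2,0,2,3,3,0,2,2,2,0,2,3,3,0,3,3,3,0,2,3,3,0,2,2,2]"
definition "H2 = [0,0,0,0,0,0,0,0,0,0,0,0,0,0,0,0,0,7,0,12,0,12,0,12,0,5,0,11,0,8,0,8,0,4,9,9,0,7,7,7,0,5,11,11,0,8,8,8,0,7,12,12,0,12,12,12,0,5,11,11,0,8,8,8]"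
definition "H3 = [0,0,0,0,0,0,0,0,0,0,0,0,0,0,0,0,0,27,0,44,0,48,0,48,0,20,0,40,0,31,0,31,0,15,32,32,0,28,28,28,0,20,40,40,0,31,31,31,0,27,44,44,0,48,48,48,0,20,40,40,0,31,31,31]"
definition "H4 = [0,0,0,0,0,0,0,0,0,0,0,0,0,0,0,0,0,107,0,173,0,178,0,178,0,79,0,157,0,115,0,115,0,59,125,125,0,103,103,103,0,79,157,157,0,115,115,115,0,107,173,173,0,178,178,178,0,79,157,157,0,115,115,115]"
definition "H5 = [0,0,0,0,0,0,0,0,0,0,0,0,0,0,0,0,0,396,0,649,0,685,0,685,0,293,0,594,0,445,0,445,0,218,471,471,0,397,397,397,0,293,594,594,0,445,445,445,0,396,649,649,0,685,685,685,0,293,594,594,0,445,445,445]"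
definition "H6 = [0,0,0,0,0,0,0,0,0,0,0,0,0,0,0,0,0,1527,0,2483,0,2604,0,2604,0,1130,0,2264,0,1688,0,1688,0,842,1798,1798,0,1510,1510,1510,0,1130,2264,2264,0,1688,1688,1688,0,1527,2483,2483,0,2604,2604,2604,0,1130,2264,2264,0,1688,1688,1688]"
definition "H7 = [0,0,0,0,0,0,0,0,0,0,0,0,0,0,0,0,0,5802,0,9462,0,9921,0,9921,0,4292,0,8637,0,6435,0,6435,0,3198,6858,6858,0,5750,5750,5750,0,4292,8637,8637,0,6435,6435,6435,0,5802,9462,9462,0,9921,9921,9921,0,4292,8637,8637,0,6435,6435,6435]"
definition "H8 = [0,0,0,0,0,0,0,0,0,0,0,0,0,0,0,0,0,22106,0,36031,0,37827,0,37827,0,16356,0,32885,0,24534,0,24534,0,12185,26110,26110,0,21930,21930,21930,0,16356,32885,32885,0,24534,24534,24534,0,22106,36031,36031,0,37827,37827,37827,0,16356,32885,32885,0,24534,24534,24534]"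
definition "Za1 = [0,0,0,0,0,0,0,0,0,0,0,0,0,0,0,0,0,2,0,3,0,3,0,3,0,2,0,3,0,2,0,2,0,1,2,2,0,2,2,2,0,2,3,3,0,2,2,2,0,2,3,3,0,3,3,3,0,2,3,3,0,2,2,2]"
definition "Za2 = [0,0,0,0,0,0,0,0,0,0,0,0,0,0,0,0,0,9,0,12,0,11,0,11,0,7,0,12,0,8,0,8,0,4,7,7,0,5,5,5,0,7,12,12,0,8,8,8,0,9,12,12,0,11,11,11,0,7,12,12,0,8,8,8]"
definition "Za3 = [0,0,0,0,0,0,0,0,0,0,0,0,0,0,0,0,0,32,0,43,0,43,0,43,0,27,0,47,0,32,0,32,0,13,24,24,0,19,19,19,0,27,47,47,0,32,32,32,0,32,43,43,0,43,43,43,0,27,47,47,0,32,32,32]"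
definition "Za4 = [0,0,0,0,0,0,0,0,0,0,0,0,0,0,0,0,0,123,0,166,0,166,0,166,0,103,0,178,0,122,0,122,0,51,94,94,0,75,75,75,0,103,178,178,0,122,122,122,0,123,166,166,0,166,166,166,0,103,178,178,0,122,122,122]"
definition "Za5 = [0,0,0,0,0,0,0,0,0,0,0,0,0,0,0,0,0,473,0,639,0,636,0,636,0,394,0,682,0,466,0,466,0,197,363,363,0,288,288,288,0,394,682,682,0,466,466,466,0,473,639,639,0,636,636,636,0,394,682,682,0,466,466,466]"
definition "Za6 = [0,0,0,0,0,0,0,0,0,0,0,0,0,0,0,0,0,1811,0,2447,0,2435,0,2435,0,1511,0,2616,0,1787,0,1787,0,754,1390,1390,0,1102,1102,1102,0,1511,2616,2616,0,1787,1787,1787,0,1811,2447,2447,0,2435,2435,2435,0,1511,2616,2616,0,1787,1787,1787]"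
definition "Za7 = [0,0,0,0,0,0,0,0,0,0,0,0,0,0,0,0,0,6941,0,9376,0,9331,0,9331,0,5793,0,10027,0,6850,0,6850,0,2889,5324,5324,0,4222,4222,4222,0,5793,10027,10027,0,6850,6850,6850,0,6941,9376,9376,0,9331,9331,9331,0,5793,10027,10027,0,6850,6850,6850]"
definition "Za8 = [0,0,0,0,0,0,0,0,0,0,0,0,0,0,0,0,0,26604,0,35935,0,35765,0,35765,0,22201,0,38427,0,26253,0,26253,0,11072,20403,20403,0,16181,16181,16181,0,22201,38427,38427,0,26253,26253,26253,0,26604,35935,35935,0,35765,35765,35765,0,22201,38427,38427,0,26253,26253,26253]"
definition "Zb1 = [0,0,0,0,0,2,1,2,0,0,2,3,0,3,2,3,0,0,0,0,0,3,2,3,0,0,2,3,0,3,2,3,0,0,0,0,0,2,2,2,0,0,3,3,0,3,3,3,0,0,0,0,0,2,2,2,0,0,2,2,0,2,2,2]"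
definition "Zb2 = [0,0,0,0,0,7,4,7,0,0,9,12,0,12,9,12,0,0,0,0,0,12,7,12,0,0,7,12,0,12,7,12,0,0,0,0,0,5,5,5,0,0,11,11,0,11,11,11,0,0,0,0,0,8,8,8,0,0,8,8,0,8,8,8]"
definition "Zb3 = [0,0,0,0,0,24,13,24,0,0,32,43,0,43,32,43,0,0,0,0,0,47,27,47,0,0,27,47,0,47,27,47,0,0,0,0,0,19,19,19,0,0,43,43,0,43,43,43,0,0,0,0,0,32,32,32,0,0,32,32,0,32,32,32]"
definition "Zb4 = [0,0,0,0,0,94,51,94,0,0,123,166,0,166,123,166,0,0,0,0,0,178,103,178,0,0,103,178,0,178,103,178,0,0,0,0,0,75,75,75,0,0,166,166,0,166,166,166,0,0,0,0,0,122,122,122,0,0,122,122,0,122,122,122]"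
definition "Zb5 = [0,0,0,0,0,363,197,363,0,0,473,639,0,639,473,639,0,0,0,0,0,682,394,682,0,0,394,682,0,682,394,682,0,0,0,0,0,288,288,288,0,0,636,636,0,636,636,636,0,0,0,0,0,466,466,466,0,0,466,466,0,466,466,466]"
definition "Zb6 = [0,0,0,0,0,1390,754,1390,0,0,1811,2447,0,2447,1811,2447,0,0,0,0,0,2616,1511,2616,0,0,1511,2616,0,2616,1511,2616,0,0,0,0,0,1102,1102,1102,0,0,2435,2435,0,2435,2435,2435,0,0,0,0,0,1787,1787,1787,0,0,1787,1787,0,1787,1787,1787]"
definition "Zb7 = [0,0,0,0,0,5324,2889,5324,0,0,6941,9376,0,9376,6941,9376,0,0,0,0,0,10027,5793,10027,0,0,5793,10027,0,10027,5793,10027,0,0,0,0,0,4222,4222,4222,0,0,9331,9331,0,9331,9331,9331,0,0,0,0,0,6850,6850,6850,0,0,6850,6850,0,6850,6850,6850]"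
definition "Zb8 = [0,0,0,0,0,20403,11072,20403,0,0,26604,35935,0,35935,26604,35935,0,0,0,0,0,38427,22201,38427,0,0,22201,38427,0,38427,22201,38427,0,0,0,0,0,16181,16181,16181,0,0,35765,35765,0,35765,35765,35765,0,0,0,0,0,26253,26253,26253,0,0,26253,26253,0,26253,26253,26253]"
lemma gL1: "liftT 3 U = L1" by (simp add: liftT_def allb_def lift_def Xs_def ok_def okc_def nxt_def tw_def L1_def U_def)
lemma gL2: "liftT 3 L1 = L2" by (simp add: liftT_def allb_def lift_def Xs_def ok_def okc_def nxt_def tw_def L1_def L2_def)
lemma gL3: "liftT 3 L2 = L3" by (simp add: liftT_def allb_def lift_def Xs_def ok_def okc_def nxt_def tw_def L2_def L3_def)
lemma gL4: "liftT 3 L3 = L4" by (simp add: liftT_def allb_def lift_def Xs_def ok_def okc_def nxt_def tw_def L3_def L4_def)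
lemma gL5: "liftT 3 L4 = L5" by (simp add: liftT_def allb_def lift_def Xs_def ok_def okc_def nxt_def tw_def L4_def L5_def)
lemma gL6: "liftT 3 L5 = L6" by (simp add: liftT_def allb_def lift_def Xs_def ok_def okc_def nxt_def tw_def L5_def L6_def)
lemma gH1: "liftT 2 U = H1" by (simp add: liftT_def allb_def lift_def Xs_def ok_def okc_def nxt_def tw_def H1_def U_def)
lemma gH2: "liftT 2 H1 = H2" by (simp add: liftT_def allb_def lift_def Xs_def ok_def okc_def nxt_def tw_def H1_def H2_def)
lemma gH3: "liftT 2 H2 = H3" by (simp add: liftT_def allb_def lift_def Xs_def ok_def okc_def nxt_def tw_def H2_def H3_def)
lemma gH4: "liftT 2 H3 = H4" by (simp add: liftT_def allb_def lift_def Xs_def ok_def okc_def nxt_def tw_def H3_def H4_def)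
lemma gH5: "liftT 2 H4 = H5" by (simp add: liftT_def allb_def lift_def Xs_def ok_def okc_def nxt_def tw_def H4_def H5_def)
lemma gH6: "liftT 2 H5 = H6" by (simp add: liftT_def allb_def lift_def Xs_def ok_def okc_def nxt_def tw_def H5_def H6_def)
lemma gH7: "liftT 2 H6 = H7" by (simp add: liftT_def allb_def lift_def Xs_def ok_def okc_def nxt_def tw_def H6_def H7_def)
lemma gH8: "liftT 2 H7 = H8" by (simp add: liftT_def allb_def lift_def Xs_def ok_def okc_def nxt_def tw_def H7_def H8_def)
lemma gZa1: "liftT 2 U = Za1" by (simp add: liftT_def allb_def lift_def Xs_def ok_def okc_def nxt_def tw_def Za1_def U_def)
lemma gZb1: "liftT 4 U = Zb1" by (simp add: liftT_def allb_def lift_def Xs_def ok_def okc_def nxt_def tw_def Zb1_def U_def)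
lemma gZa2: "liftT 2 Zb1 = Za2" by (simp add: liftT_def allb_def lift_def Xs_def ok_def okc_def nxt_def tw_def Zb1_def Za2_def)
lemma gZb2: "liftT 4 Za1 = Zb2" by (simp add: liftT_def allb_def lift_def Xs_def ok_def okc_def nxt_def tw_def Za1_def Zb2_def)
lemma gZa3: "liftT 2 Zb2 = Za3" by (simp add: liftT_def allb_def lift_def Xs_def ok_def okc_def nxt_def tw_def Zb2_def Za3_def)
lemma gZb3: "liftT 4 Za2 = Zb3" by (simp add: liftT_def allb_def lift_def Xs_def ok_def okc_def nxt_def tw_def Za2_def Zb3_def)
lemma gZa4: "liftT 2 Zb3 = Za4" by (simp add: liftT_def allb_def lift_def Xs_def ok_def okc_def nxt_def tw_def Zb3_def Za4_def)
lemma gZb4: "liftT 4 Za3 = Zb4" by (simp add: liftT_def allb_def lift_def Xs_def ok_def okc_def nxt_def tw_def Za3_def Zb4_def)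
lemma gZa5: "liftT 2 Zb4 = Za5" by (simp add: liftT_def allb_def lift_def Xs_def ok_def okc_def nxt_def tw_def Zb4_def Za5_def)
lemma gZb5: "liftT 4 Za4 = Zb5" by (simp add: liftT_def allb_def lift_def Xs_def ok_def okc_def nxt_def tw_def Za4_def Zb5_def)
lemma gZa6: "liftT 2 Zb5 = Za6" by (simp add: liftT_def allb_def lift_def Xs_def ok_def okc_def nxt_def tw_def Zb5_def Za6_def)
lemma gZb6: "liftT 4 Za5 = Zb6" by (simp add: liftT_def allb_def lift_def Xs_def ok_def okc_def nxt_def tw_def Za5_def Zb6_def)
lemma gZa7: "liftT 2 Zb6 = Za7" by (simp add: liftT_def allb_def lift_def Xs_def ok_def okc_def nxt_def tw_def Zb6_def Za7_def)
lemma gZb7: "liftT 4 Za6 = Zb7" by (simp add: liftT_def allb_def lift_def Xs_def ok_def okc_def nxt_def tw_def Za6_def Zb7_def)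
lemma gZa8: "liftT 2 Zb7 = Za8" by (simp add: liftT_def allb_def lift_def Xs_def ok_def okc_def nxt_def tw_def Zb7_def Za8_def)
lemma gZb8: "liftT 4 Za7 = Zb8" by (simp add: liftT_def allb_def lift_def Xs_def ok_def okc_def nxt_def tw_def Za7_def Zb8_def)


lemma kL_ok: "\<forall>i. 2 \<le> kL i \<and> kL i \<le> 4" by (simp add: kL_def)
lemma kH_ok: "\<forall>i. 2 \<le> kH i \<and> kH i \<le> 4" by (simp add: kH_def)
lemma kZ_ok: "\<forall>i. 2 \<le> kZ i \<and> kZ i \<le> 4" by (simp add: kZ_def)

lemma kZ_cases: "1 \<le> m \<Longrightarrow> kZ m = 2 \<or> kZ m = 4" by (simp add: kZ_def)
lemma kZ_next2: "1 \<le> m \<Longrightarrow> kZ m = 2 \<Longrightarrow> kZ (Suc m) = 4"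
  by (auto simp: kZ_def split: if_splits)
lemma kZ_next4: "1 \<le> m \<Longrightarrow> kZ m = 4 \<Longrightarrow> kZ (Suc m) = 2"
  by (auto simp: kZ_def split: if_splits)

lemma sL0: "length b = 6 \<Longrightarrow> iterL kL m 0 uu b = tw U b" by (rule iter0)
lemma sL1: "length b = 6 \<Longrightarrow> iterL kL m 1 uu b = tw L1 b"
  using iter_step[of kL m 0 uu "U" 3 b, OF sL0] unfolding gL1 by (simp add: kL_def eval_nat_numeral)
lemma sL2: "length b = 6 \<Longrightarrow> iterL kL m 2 uu b = tw L2 b"
  using iter_step[of kL m 1 uu "L1" 3 b, OF sL1] unfolding gL2 by (simp add: kL_def eval_nat_numeral)
lemma sL3: "length b = 6 \<Longrightarrow> iterL kL m 3 uu b = tw L3 b"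
  using iter_step[of kL m 2 uu "L2" 3 b, OF sL2] unfolding gL3 by (simp add: kL_def eval_nat_numeral)
lemma sL4: "length b = 6 \<Longrightarrow> iterL kL m 4 uu b = tw L4 b"
  using iter_step[of kL m 3 uu "L3" 3 b, OF sL3] unfolding gL4 by (simp add: kL_def eval_nat_numeral)
lemma sL5: "length b = 6 \<Longrightarrow> iterL kL m 5 uu b = tw L5 b"
  using iter_step[of kL m 4 uu "L4" 3 b, OF sL4] unfolding gL5 by (simp add: kL_def eval_nat_numeral)
lemma sL6: "length b = 6 \<Longrightarrow> iterL kL m 6 uu b = tw L6 b"
  using iter_step[of kL m 5 uu "L5" 3 b, OF sL5] unfolding gL6 by (simp add: kL_def eval_nat_numeral)
lemma sH0: "length b = 6 \<Longrightarrow> iterL kH m 0 uu b = tw U b" by (rule iter0)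
lemma sH1: "1 \<le> m \<Longrightarrow> length b = 6 \<Longrightarrow> iterL kH m 1 uu b = tw H1 b"
  using iter_step[of kH m 0 uu "U" 2 b, OF sH0] unfolding gH1 by (simp add: kH_def eval_nat_numeral)
lemma sH2: "1 \<le> m \<Longrightarrow> length b = 6 \<Longrightarrow> iterL kH m 2 uu b = tw H2 b"
  using iter_step[of kH m 1 uu "H1" 2 b, OF sH1] unfolding gH2 by (simp add: kH_def eval_nat_numeral)
lemma sH3: "1 \<le> m \<Longrightarrow> length b = 6 \<Longrightarrow> iterL kH m 3 uu b = tw H3 b"
  using iter_step[of kH m 2 uu "H2" 2 b, OF sH2] unfolding gH3 by (simp add: kH_def eval_nat_numeral)
lemma sH4: "1 \<le> m \<Longrightarrow> length b = 6 \<Longrightarrow> iterL kH m 4 uu b = tw H4 b"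
  using iter_step[of kH m 3 uu "H3" 2 b, OF sH3] unfolding gH4 by (simp add: kH_def eval_nat_numeral)
lemma sH5: "1 \<le> m \<Longrightarrow> length b = 6 \<Longrightarrow> iterL kH m 5 uu b = tw H5 b"
  using iter_step[of kH m 4 uu "H4" 2 b, OF sH4] unfolding gH5 by (simp add: kH_def eval_nat_numeral)
lemma sH6: "1 \<le> m \<Longrightarrow> length b = 6 \<Longrightarrow> iterL kH m 6 uu b = tw H6 b"
  using iter_step[of kH m 5 uu "H5" 2 b, OF sH5] unfolding gH6 by (simp add: kH_def eval_nat_numeral)
lemma sH7: "1 \<le> m \<Longrightarrow> length b = 6 \<Longrightarrow> iterL kH m 7 uu b = tw H7 b"
  using iter_step[of kH m 6 uu "H6" 2 b, OF sH6] unfolding gH7 by (simp add: kH_def eval_nat_numeral)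
lemma sH8: "1 \<le> m \<Longrightarrow> length b = 6 \<Longrightarrow> iterL kH m 8 uu b = tw H8 b"
  using iter_step[of kH m 7 uu "H7" 2 b, OF sH7] unfolding gH8 by (simp add: kH_def eval_nat_numeral)
lemma sZa0: "1 \<le> m \<Longrightarrow> kZ m = 2 \<Longrightarrow> length b = 6 \<Longrightarrow> iterL kZ m 0 uu b = tw U b" by (rule iter0)
lemma sZb0: "1 \<le> m \<Longrightarrow> kZ m = 4 \<Longrightarrow> length b = 6 \<Longrightarrow> iterL kZ m 0 uu b = tw U b" by (rule iter0)
lemma sZa1: "1 \<le> m \<Longrightarrow> kZ m = 2 \<Longrightarrow> length b = 6 \<Longrightarrow> iterL kZ m 1 uu b = tw Za1 b"
  using iter_step[of kZ m 0 uu "U" 2 b, OF sZb0[of "Suc m"]] kZ_next2 unfolding gZa1 by (simp add: eval_nat_numeral)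
lemma sZb1: "1 \<le> m \<Longrightarrow> kZ m = 4 \<Longrightarrow> length b = 6 \<Longrightarrow> iterL kZ m 1 uu b = tw Zb1 b"
  using iter_step[of kZ m 0 uu "U" 4 b, OF sZa0[of "Suc m"]] kZ_next4 unfolding gZb1 by (simp add: eval_nat_numeral)
lemma sZa2: "1 \<le> m \<Longrightarrow> kZ m = 2 \<Longrightarrow> length b = 6 \<Longrightarrow> iterL kZ m 2 uu b = tw Za2 b"
  using iter_step[of kZ m 1 uu "Zb1" 2 b, OF sZb1[of "Suc m"]] kZ_next2 unfolding gZa2 by (simp add: eval_nat_numeral)
lemma sZb2: "1 \<le> m \<Longrightarrow> kZ m = 4 \<Longrightarrow> length b = 6 \<Longrightarrow> iterL kZ m 2 uu b = tw Zb2 b"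
  using iter_step[of kZ m 1 uu "Za1" 4 b, OF sZa1[of "Suc m"]] kZ_next4 unfolding gZb2 by (simp add: eval_nat_numeral)
lemma sZa3: "1 \<le> m \<Longrightarrow> kZ m = 2 \<Longrightarrow> length b = 6 \<Longrightarrow> iterL kZ m 3 uu b = tw Za3 b"
  using iter_step[of kZ m 2 uu "Zb2" 2 b, OF sZb2[of "Suc m"]] kZ_next2 unfolding gZa3 by (simp add: eval_nat_numeral)
lemma sZb3: "1 \<le> m \<Longrightarrow> kZ m = 4 \<Longrightarrow> length b = 6 \<Longrightarrow> iterL kZ m 3 uu b = tw Zb3 b"
  using iter_step[of kZ m 2 uu "Za2" 4 b, OF sZa2[of "Suc m"]] kZ_next4 unfolding gZb3 by (simp add: eval_nat_numeral)
lemma sZa4: "1 \<le> m \<Longrightarrow> kZ m = 2 \<Longrightarrow> length b = 6 \<Longrightarrow> iterL kZ m 4 uu b = tw Za4 b"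
  using iter_step[of kZ m 3 uu "Zb3" 2 b, OF sZb3[of "Suc m"]] kZ_next2 unfolding gZa4 by (simp add: eval_nat_numeral)
lemma sZb4: "1 \<le> m \<Longrightarrow> kZ m = 4 \<Longrightarrow> length b = 6 \<Longrightarrow> iterL kZ m 4 uu b = tw Zb4 b"
  using iter_step[of kZ m 3 uu "Za3" 4 b, OF sZa3[of "Suc m"]] kZ_next4 unfolding gZb4 by (simp add: eval_nat_numeral)
lemma sZa5: "1 \<le> m \<Longrightarrow> kZ m = 2 \<Longrightarrow> length b = 6 \<Longrightarrow> iterL kZ m 5 uu b = tw Za5 b"
  using iter_step[of kZ m 4 uu "Zb4" 2 b, OF sZb4[of "Suc m"]] kZ_next2 unfolding gZa5 by (simp add: eval_nat_numeral)
lemma sZb5: "1 \<le> m \<Longrightarrow> kZ m = 4 \<Longrightarrow> length b = 6 \<Longrightarrow> iterL kZ m 5 uu b = tw Zb5 b"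
  using iter_step[of kZ m 4 uu "Za4" 4 b, OF sZa4[of "Suc m"]] kZ_next4 unfolding gZb5 by (simp add: eval_nat_numeral)
lemma sZa6: "1 \<le> m \<Longrightarrow> kZ m = 2 \<Longrightarrow> length b = 6 \<Longrightarrow> iterL kZ m 6 uu b = tw Za6 b"
  using iter_step[of kZ m 5 uu "Zb5" 2 b, OF sZb5[of "Suc m"]] kZ_next2 unfolding gZa6 by (simp add: eval_nat_numeral)
lemma sZb6: "1 \<le> m \<Longrightarrow> kZ m = 4 \<Longrightarrow> length b = 6 \<Longrightarrow> iterL kZ m 6 uu b = tw Zb6 b"
  using iter_step[of kZ m 5 uu "Za5" 4 b, OF sZa5[of "Suc m"]] kZ_next4 unfolding gZb6 by (simp add: eval_nat_numeral)
lemma sZa7: "1 \<le> m \<Longrightarrow> kZ m = 2 \<Longrightarrow> length b = 6 \<Longrightarrow> iterL kZ m 7 uu b = tw Za7 b"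
  using iter_step[of kZ m 6 uu "Zb6" 2 b, OF sZb6[of "Suc m"]] kZ_next2 unfolding gZa7 by (simp add: eval_nat_numeral)
lemma sZb7: "1 \<le> m \<Longrightarrow> kZ m = 4 \<Longrightarrow> length b = 6 \<Longrightarrow> iterL kZ m 7 uu b = tw Zb7 b"
  using iter_step[of kZ m 6 uu "Za6" 4 b, OF sZa6[of "Suc m"]] kZ_next4 unfolding gZb7 by (simp add: eval_nat_numeral)
lemma sZa8: "1 \<le> m \<Longrightarrow> kZ m = 2 \<Longrightarrow> length b = 6 \<Longrightarrow> iterL kZ m 8 uu b = tw Za8 b"
  using iter_step[of kZ m 7 uu "Zb7" 2 b, OF sZb7[of "Suc m"]] kZ_next2 unfolding gZa8 by (simp add: eval_nat_numeral)
lemma sZb8: "1 \<le> m \<Longrightarrow> kZ m = 4 \<Longrightarrow> length b = 6 \<Longrightarrow> iterL kZ m 8 uu b = tw Zb8 b"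
  using iter_step[of kZ m 7 uu "Za7" 4 b, OF sZa7[of "Suc m"]] kZ_next4 unfolding gZb8 by (simp add: eval_nat_numeral)


lemma growth_bounds:
  fixes a cf :: "nat \<Rightarrow> real"
  assumes pos: "\<And>n. a n > 0" and d: "0 < d" and cnn: "\<And>i. 0 \<le> cf i"
    and rec: "\<And>m. m \<ge> mz \<Longrightarrow> a (m + d) = (\<Sum>i<d. cf i * a (m + i))"
    and r: "0 < r" "r ^ d = (\<Sum>i<d. cf i * r ^ i)"
  shows "\<exists>lo hi. 0 < lo \<and> (\<forall>n\<ge>mz. lo * r ^ n \<le> a n \<and> a n \<le> hi * r ^ n)"
proof -
  define W where "W = (\<lambda>n. a n / r ^ n) ` {mz..<mz+d}"
  have Wf: "finite W" "W \<noteq> {}" using d by (auto simp: W_def)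
  define lo where "lo = Min W"
  define hi where "hi = Max W"
  have lo_pos: "0 < lo" using Wf pos r(1) by (auto simp: lo_def W_def)
  have base: "lo * r ^ n \<le> a n \<and> a n \<le> hi * r ^ n" if "mz \<le> n" "n < mz + d" for n
  proof -
    have "a n / r ^ n \<in> W" using that by (auto simp: W_def)
    then have "lo \<le> a n / r ^ n" "a n / r ^ n \<le> hi" using Wf by (auto simp: lo_def hi_def)
    then show ?thesis using r(1) by (simp add: field_simps)
  qed
  have main: "lo * r ^ n \<le> a n \<and> a n \<le> hi * r ^ n" if "mz \<le> n" for n
    using that
  proof (induction n rule: less_induct)
    case (less n)
    have IH: "\<forall>k<n. mz \<le> k \<longrightarrow> lo * r ^ k \<le> a k \<and> a k \<le> hi * r ^ k" using less.IH by blast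
    have "mz \<le> n" by (rule less.prems)
    show "lo * r ^ n \<le> a n \<and> a n \<le> hi * r ^ n"
      proof (cases "n < mz + d")
        case True then show ?thesis using base `mz \<le> n` by blast
      next
        case False
        define m where "m = n - d"
        have n: "n = m + d" "mz \<le> m" using False by (auto simp: m_def)
        have ih: "\<And>i. i < d \<Longrightarrow> lo * r ^ (m + i) \<le> a (m + i) \<and> a (m + i) \<le> hi * r ^ (m + i)"
          using IH n d by auto
        have "a n = (\<Sum>i<d. cf i * a (m + i))" using rec[OF n(2)] n by simp
        also have "... \<le> (\<Sum>i<d. cf i * (hi * r ^ (m + i)))"
          by (rule sum_mono) (use ih cnn in \<open>auto intro: mult_left_mono\<close>)
        also have "... = hi * r ^ m * (\<Sum>i<d. cf i * r ^ i)"
          by (simp add: sum_distrib_left power_add algebra_simps)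
        also have "... = hi * r ^ n" using r(2) n by (simp add: power_add)
        finally have up: "a n \<le> hi * r ^ n" .
        have "lo * r ^ n = lo * r ^ m * (\<Sum>i<d. cf i * r ^ i)" using r(2) n by (simp add: power_add)
        also have "... = (\<Sum>i<d. cf i * (lo * r ^ (m + i)))"
          by (simp add: sum_distrib_left power_add algebra_simps)
        also have "... \<le> (\<Sum>i<d. cf i * a (m + i))"
          by (rule sum_mono) (use ih cnn in \<open>auto intro: mult_left_mono\<close>)
        also have "... = a n" using rec[OF n(2)] n by simp
        finally show ?thesis using up by simp
      qed
  qed
  then show ?thesis using lo_pos by blast
qed

lemma growth:
  fixes a cf :: "nat \<Rightarrow> real"
  assumes pos: "\<And>n. a n > 0" and d: "0 < d" and cnn: "\<And>i. 0 \<le> cf i"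
    and rec: "\<And>m. m \<ge> mz \<Longrightarrow> a (m + d) = (\<Sum>i<d. cf i * a (m + i))"
    and r: "0 < r" "r ^ d = (\<Sum>i<d. cf i * r ^ i)"
  shows "(\<lambda>n. root n (a (n - 1))) \<longlonglongrightarrow> r"
proof -
  obtain lo hi where lh: "0 < lo" "\<forall>n\<ge>mz. lo * r ^ n \<le> a n \<and> a n \<le> hi * r ^ n"
    using growth_bounds[OF assms] by blast
  have hi: "0 < hi"
  proof -
    have "0 < a mz" by (rule pos)
    also have "... \<le> hi * r ^ mz" using lh by auto
    finally show ?thesis using r(1) by (simp add: zero_less_mult_iff)
  qed
  have ev: "eventually (\<lambda>n. root n (lo / r) * r \<le> root n (a (n - 1)) \<and> root n (a (n - 1)) \<le> root n (hi / r) * r) sequentially"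
    unfolding eventually_sequentially
  proof (intro exI[of _ "Suc mz"] allI impI)
    fix n assume n: "Suc mz \<le> n"
    then have n1: "mz \<le> n - 1" "0 < n" by auto
    have eq: "\<And>c. c / r * r ^ n = c * r ^ (n - 1)"
      using n1(2) r(1) by (metis Suc_diff_1 nonzero_mult_div_cancel_left order_less_irrefl power_Suc times_divide_eq_right mult.commute)
    have rn: "\<And>c. root n (c / r * r ^ n) = root n (c / r) * r"
      unfolding real_root_mult using n1(2) r(1) real_root_power_cancel[of n r] by simp
    have "root n (lo / r * r ^ n) \<le> root n (a (n - 1))"
      using lh n1 eq[of lo] by (intro real_root_le_mono) auto
    moreover have "root n (a (n - 1)) \<le> root n (hi / r * r ^ n)"
      using lh n1 eq[of hi] by (intro real_root_le_mono) auto
    ultimately show "root n (lo / r) * r \<le> root n (a (n - 1)) \<and> root n (a (n - 1)) \<le> root n (hi / r) * r"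
      using rn by simp
  qed
  have l1: "(\<lambda>n. root n (lo / r) * r) \<longlonglongrightarrow> 1 * r"
    by (intro tendsto_mult LIMSEQ_root_const tendsto_const) (use lh r in auto)
  have l2: "(\<lambda>n. root n (hi / r) * r) \<longlonglongrightarrow> 1 * r"
    by (intro tendsto_mult LIMSEQ_root_const tendsto_const) (use hi r in auto)
  show ?thesis using tendsto_sandwich[OF _ _ l1 l2] ev by (simp add: eventually_conj_iff)
qed


lemma lrr:
  fixes f :: "real \<Rightarrow> real" and cf :: "nat \<Rightarrow> real"
  assumes f: "\<And>t. f t = t^d - (\<Sum>i<d. cf i * t^i)" and cnn: "\<And>i. 0 \<le> cf i"
    and fin: "finite {t. f t = 0}" and lo: "0 < lo" "lo < hi" "f lo < 0" "0 < f hi"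
  shows "lo < largest_real_root f \<and> largest_real_root f < hi \<and>
         (largest_real_root f)^d = (\<Sum>i<d. cf i * (largest_real_root f)^i)"
proof -
  define g where "g t = 1 - (\<Sum>i<d. cf i / t^(d-i))" for t :: real
  have fg: "f t = t^d * g t" if "0 < t" for t
  proof -
    have "t^d * (cf i / t^(d-i)) = cf i * t^i" if "i < d" for i
    proof -
      have "t^d = t^i * t^(d-i)" using `i<d` by (simp add: power_add[symmetric])
      then show ?thesis using `0<t` by (simp add: field_simps)
    qed
    then have "t^d * (\<Sum>i<d. cf i / t^(d-i)) = (\<Sum>i<d. cf i * t^i)"
      by (simp add: sum_distrib_left)
    then show ?thesis by (simp add: f g_def right_diff_distrib)
  qed
  have gmono: "g s \<le> g t" if "0 < s" "s \<le> t" for s t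
  proof -
    have "(\<Sum>i<d. cf i / t^(d-i)) \<le> (\<Sum>i<d. cf i / s^(d-i))"
    proof (rule sum_mono)
      fix i assume "i \<in> {..<d}"
      have "s^(d-i) \<le> t^(d-i)" using that by (intro power_mono) auto
      moreover have "0 < s^(d-i)" using that by simp
      ultimately show "cf i / t^(d-i) \<le> cf i / s^(d-i)" using cnn[of i] by (intro divide_left_mono) auto
    qed
    then show ?thesis by (simp add: g_def)
  qed
  have sign: "f t > 0 \<longleftrightarrow> g t > 0" "f t < 0 \<longleftrightarrow> g t < 0" if "0 < t" for t
    using fg[OF that] that by (simp_all add: zero_less_mult_iff mult_less_0_iff)
  have fc: "f = (\<lambda>t. t^d - (\<Sum>i<d. cf i * t^i))" by (rule ext) (rule f)
  have cont: "isCont f x" for x unfolding fc by (intro continuous_intros)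
  obtain t0 where t0: "lo \<le> t0" "t0 \<le> hi" "f t0 = 0"
    using IVT[of f lo 0 hi] lo cont by auto
  have t0lo: "lo < t0" using t0 lo by (cases "t0 = lo") auto
  define S where "S = {t. f t = 0}"
  have finS: "finite S" and t0S: "t0 \<in> S" using fin t0 by (auto simp: S_def)
  have SM: "Max S \<in> S" "t0 \<le> Max S" using Max_in[OF finS] Max_ge[OF finS t0S] t0S by auto
  have rpos: "lo < Max S" using SM t0lo by simp
  have "f (Max S) = 0" using SM(1) by (simp add: S_def)
  moreover have "0 < Max S" using rpos lo by simp
  ultimately have g0: "g (Max S) = 0" using fg by simp
  have "Max S < hi"
  proof (rule ccontr)
    assume "\<not> Max S < hi"
    then have "g hi \<le> g (Max S)" using gmono lo by auto
    moreover have "g hi > 0" using sign(1)[of hi] lo by simp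
    ultimately show False using g0 by simp
  qed
  moreover have "(Max S)^d = (\<Sum>i<d. cf i * (Max S)^i)" using `f (Max S) = 0` f by simp
  ultimately show ?thesis using rpos by (simp add: largest_real_root_def S_def)
qed


lemma sum5: "(\<Sum>i<(5::nat). f i) = f 0 + f 1 + f 2 + f 3 + (f 4 :: real)"
  by (simp add: eval_nat_numeral)

lemma rootL: "4.019233 < largest_real_root (\<lambda>t::real. t^5 - 4*t^4 - t - 1) \<and>
   largest_real_root (\<lambda>t::real. t^5 - 4*t^4 - t - 1) < 4.019234 \<and>
   (largest_real_root (\<lambda>t::real. t^5 - 4*t^4 - t - 1))^5 =
   (\<Sum>i<5. (if i < 5 then [1,1,0,0,4::real]!i else 0) * (largest_real_root (\<lambda>t::real. t^5 - 4*t^4 - t - 1))^i)"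
proof (rule lrr)
  fix t :: real
  show "t^5 - 4*t^4 - t - 1 = t^5 - (\<Sum>i<5. (if i < 5 then [1,1,0,0,4::real]!i else 0) * t^i)"
    by (simp add: sum5)
next
  fix i :: nat show "0 \<le> (if i < 5 then [1,1,0,0,4::real]!i else 0)" by (auto simp: less_Suc_eq numeral_eq_Suc nth_Cons')
next
  have "{t::real. t^5 - 4*t^4 - t - 1 = 0} = {t. poly [:-1,-1,0,0,-4,1:] t = 0}"
    by (simp add: algebra_simps eval_nat_numeral)
  moreover have "[:-1,-1,0,0,-4,1::real:] \<noteq> 0" by simp
  ultimately show "finite {t::real. t^5 - 4*t^4 - t - 1 = 0}" using poly_roots_finite by metis
qed (simp_all add: power_divide)


lemma sum7: "(\<Sum>i<(7::nat). f i) = f 0 + f 1 + f 2 + f 3 + f 4 + f 5 + (f 6 :: real)"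
  by (simp add: eval_nat_numeral)

lemma rootZ: "3.832558 < largest_real_root (\<lambda>t::real. t^7 - 3*t^6 - t^5 - 6*t^4 - 7*t^3 - 7*t^2 - 5*t - 1) \<and>
   largest_real_root (\<lambda>t::real. t^7 - 3*t^6 - t^5 - 6*t^4 - 7*t^3 - 7*t^2 - 5*t - 1) < 3.832559 \<and>
   (largest_real_root (\<lambda>t::real. t^7 - 3*t^6 - t^5 - 6*t^4 - 7*t^3 - 7*t^2 - 5*t - 1))^7 =
   (\<Sum>i<7. (if i < 7 then [1,5,7,7,6,1,3::real]!i else 0) * (largest_real_root (\<lambda>t::real. t^7 - 3*t^6 - t^5 - 6*t^4 - 7*t^3 - 7*t^2 - 5*t - 1))^i)"
proof (rule lrr)
  fix t :: real
  show "t^7 - 3*t^6 - t^5 - 6*t^4 - 7*t^3 - 7*t^2 - 5*t - 1 = t^7 - (\<Sum>i<7. (if i < 7 then [1,5,7,7,6,1,3::real]!i else 0) * t^i)"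
    by (simp add: sum7)
next
  fix i :: nat show "0 \<le> (if i < 7 then [1,5,7,7,6,1,3::real]!i else 0)" by (auto simp: less_Suc_eq numeral_eq_Suc nth_Cons')
next
  have "{t::real. t^7 - 3*t^6 - t^5 - 6*t^4 - 7*t^3 - 7*t^2 - 5*t - 1 = 0} = {t. poly [:-1,-5,-7,-7,-6,-1,-3,1:] t = 0}"
    by (simp add: algebra_simps eval_nat_numeral)
  moreover have "[:-1,-5,-7,-7,-6,-1,-3,1::real:] \<noteq> 0" by simp
  ultimately show "finite {t::real. t^7 - 3*t^6 - t^5 - 6*t^4 - 7*t^3 - 7*t^2 - 5*t - 1 = 0}" using poly_roots_finite by metis
qed (simp_all add: power_divide)

lemma rootH: "3.810626 < largest_real_root (\<lambda>t::real. t^7 - t^6 - 7*t^5 - 12*t^4 - 6*t^3 - 7*t^2 - 4*t - 2) \<and>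
   largest_real_root (\<lambda>t::real. t^7 - t^6 - 7*t^5 - 12*t^4 - 6*t^3 - 7*t^2 - 4*t - 2) < 3.810627 \<and>
   (largest_real_root (\<lambda>t::real. t^7 - t^6 - 7*t^5 - 12*t^4 - 6*t^3 - 7*t^2 - 4*t - 2))^7 =
   (\<Sum>i<7. (if i < 7 then [2,4,7,6,12,7,1::real]!i else 0) * (largest_real_root (\<lambda>t::real. t^7 - t^6 - 7*t^5 - 12*t^4 - 6*t^3 - 7*t^2 - 4*t - 2))^i)"
proof (rule lrr)
  fix t :: real
  show "t^7 - t^6 - 7*t^5 - 12*t^4 - 6*t^3 - 7*t^2 - 4*t - 2 = t^7 - (\<Sum>i<7. (if i < 7 then [2,4,7,6,12,7,1::real]!i else 0) * t^i)"
    by (simp add: sum7)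
next
  fix i :: nat show "0 \<le> (if i < 7 then [2,4,7,6,12,7,1::real]!i else 0)" by (auto simp: less_Suc_eq numeral_eq_Suc nth_Cons')
next
  have "{t::real. t^7 - t^6 - 7*t^5 - 12*t^4 - 6*t^3 - 7*t^2 - 4*t - 2 = 0} = {t. poly [:-2,-4,-7,-6,-12,-7,-1,1:] t = 0}"
    by (simp add: algebra_simps eval_nat_numeral)
  moreover have "[:-2,-4,-7,-6,-12,-7,-1,1::real:] \<noteq> 0" by simp
  ultimately show "finite {t::real. t^7 - t^6 - 7*t^5 - 12*t^4 - 6*t^3 - 7*t^2 - 4*t - 2 = 0}" using poly_roots_finite by metis
qed (simp_all add: power_divide)


lemma sum6: "(\<Sum>i<(6::nat). f i) = f 0 + f 1 + f 2 + f 3 + f 4 + (f 5 :: real)"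
  by (simp add: eval_nat_numeral)
lemma sum8: "(\<Sum>i<(8::nat). f i) = f 0 + f 1 + f 2 + f 3 + f 4 + f 5 + f 6 + (f 7 :: real)"
  by (simp add: eval_nat_numeral)

lemma Fs_tab: assumes "\<And>b. length b = 6 \<Longrightarrow> iterL kf m j uu b = tw T b" "\<forall>i. 2 \<le> kf i \<and> kf i \<le> 4"
  shows "Fs (SS kf (m + j)) uu = Fs (SS kf m) (tw T)"
  using Fs_iter[OF assms(2), of m j uu] Fs_cong[of "iterL kf m j uu" "tw T"] assms(1) by simp

lemma idL: "\<forall>b\<in>set allb. tw L6 b = 4 * tw L5 b + tw L2 b + tw L1 b"
  by (simp add: allb_def tw_def L6_def L5_def L2_def L1_def)
lemma idH: "\<forall>b\<in>set allb. tw H8 b = tw H7 b + 7 * tw H6 b + 12 * tw H5 b + 6 * tw H4 b + 7 * tw H3 b + 4 * tw H2 b + 2 * tw H1 b"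
  by (simp add: allb_def tw_def H8_def H7_def H6_def H5_def H4_def H3_def H2_def H1_def)
lemma idZa: "\<forall>b\<in>set allb. tw Za8 b = 3 * tw Za7 b + tw Za6 b + 6 * tw Za5 b + 7 * tw Za4 b + 7 * tw Za3 b + 5 * tw Za2 b + tw Za1 b"
  by (simp add: allb_def tw_def Za8_def Za7_def Za6_def Za5_def Za4_def Za3_def Za2_def Za1_def)
lemma idZb: "\<forall>b\<in>set allb. tw Zb8 b = 3 * tw Zb7 b + tw Zb6 b + 6 * tw Zb5 b + 7 * tw Zb4 b + 7 * tw Zb3 b + 5 * tw Zb2 b + tw Zb1 b"
  by (simp add: allb_def tw_def Zb8_def Zb7_def Zb6_def Zb5_def Zb4_def Zb3_def Zb2_def Zb1_def)

lemma recL: "Fs (SS kL (m+6)) uu = 4 * Fs (SS kL (m+5)) uu + Fs (SS kL (m+2)) uu + Fs (SS kL (m+1)) uu"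
proof -
  have "Fs (SS kL (m+6)) uu = Fs (SS kL m) (tw L6)" using Fs_tab[OF sL6 kL_ok] .
  also have "... = Fs (SS kL m) (\<lambda>b. 4 * tw L5 b + tw L2 b + tw L1 b)"
    using idL allb_set by (intro Fs_cong) blast
  also have "... = 4 * Fs (SS kL m) (tw L5) + Fs (SS kL m) (tw L2) + Fs (SS kL m) (tw L1)"
    by (simp add: Fs_add Fs_mult)
  also have "... = 4 * Fs (SS kL (m+5)) uu + Fs (SS kL (m+2)) uu + Fs (SS kL (m+1)) uu"
    using Fs_tab[OF sL5 kL_ok] Fs_tab[OF sL2 kL_ok] Fs_tab[OF sL1 kL_ok] by simp
  finally show ?thesis .
qed

lemma recH: assumes "1 \<le> m" shows "Fs (SS kH (m+8)) uu = Fs (SS kH (m+7)) uu + 7 * Fs (SS kH (m+6)) uu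
  + 12 * Fs (SS kH (m+5)) uu + 6 * Fs (SS kH (m+4)) uu + 7 * Fs (SS kH (m+3)) uu + 4 * Fs (SS kH (m+2)) uu + 2 * Fs (SS kH (m+1)) uu"
proof -
  have "Fs (SS kH (m+8)) uu = Fs (SS kH m) (tw H8)" using Fs_tab[OF sH8[OF assms] kH_ok] .
  also have "... = Fs (SS kH m) (\<lambda>b. tw H7 b + 7 * tw H6 b + 12 * tw H5 b + 6 * tw H4 b + 7 * tw H3 b + 4 * tw H2 b + 2 * tw H1 b)"
    using idH allb_set by (intro Fs_cong) blast
  also have "... = Fs (SS kH m) (tw H7) + 7 * Fs (SS kH m) (tw H6) + 12 * Fs (SS kH m) (tw H5) + 6 * Fs (SS kH m) (tw H4)
     + 7 * Fs (SS kH m) (tw H3) + 4 * Fs (SS kH m) (tw H2) + 2 * Fs (SS kH m) (tw H1)"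
    by (simp add: Fs_add Fs_mult)
  also have "... = Fs (SS kH (m+7)) uu + 7 * Fs (SS kH (m+6)) uu
  + 12 * Fs (SS kH (m+5)) uu + 6 * Fs (SS kH (m+4)) uu + 7 * Fs (SS kH (m+3)) uu + 4 * Fs (SS kH (m+2)) uu + 2 * Fs (SS kH (m+1)) uu"
    using Fs_tab[OF sH7[OF assms] kH_ok] Fs_tab[OF sH6[OF assms] kH_ok] Fs_tab[OF sH5[OF assms] kH_ok]
      Fs_tab[OF sH4[OF assms] kH_ok] Fs_tab[OF sH3[OF assms] kH_ok] Fs_tab[OF sH2[OF assms] kH_ok]
      Fs_tab[OF sH1[OF assms] kH_ok] by simp
  finally show ?thesis .
qed

lemma recZ: assumes "1 \<le> m" shows "Fs (SS kZ (m+8)) uu = 3 * Fs (SS kZ (m+7)) uu + Fs (SS kZ (m+6)) uu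
  + 6 * Fs (SS kZ (m+5)) uu + 7 * Fs (SS kZ (m+4)) uu + 7 * Fs (SS kZ (m+3)) uu + 5 * Fs (SS kZ (m+2)) uu + Fs (SS kZ (m+1)) uu"
proof (cases "kZ m = 2")
  case True
  note a = assms True
  have "Fs (SS kZ (m+8)) uu = Fs (SS kZ m) (tw Za8)" using Fs_tab[OF sZa8[OF a] kZ_ok] .
  also have "... = Fs (SS kZ m) (\<lambda>b. 3 * tw Za7 b + tw Za6 b + 6 * tw Za5 b + 7 * tw Za4 b + 7 * tw Za3 b + 5 * tw Za2 b + tw Za1 b)"
    using idZa allb_set by (intro Fs_cong) blast
  also have "... = 3 * Fs (SS kZ m) (tw Za7) + Fs (SS kZ m) (tw Za6) + 6 * Fs (SS kZ m) (tw Za5) + 7 * Fs (SS kZ m) (tw Za4)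
     + 7 * Fs (SS kZ m) (tw Za3) + 5 * Fs (SS kZ m) (tw Za2) + Fs (SS kZ m) (tw Za1)"
    by (simp add: Fs_add Fs_mult)
  also have "... = 3 * Fs (SS kZ (m+7)) uu + Fs (SS kZ (m+6)) uu
  + 6 * Fs (SS kZ (m+5)) uu + 7 * Fs (SS kZ (m+4)) uu + 7 * Fs (SS kZ (m+3)) uu + 5 * Fs (SS kZ (m+2)) uu + Fs (SS kZ (m+1)) uu"
    using Fs_tab[OF sZa7[OF a] kZ_ok] Fs_tab[OF sZa6[OF a] kZ_ok] Fs_tab[OF sZa5[OF a] kZ_ok]
      Fs_tab[OF sZa4[OF a] kZ_ok] Fs_tab[OF sZa3[OF a] kZ_ok] Fs_tab[OF sZa2[OF a] kZ_ok]
      Fs_tab[OF sZa1[OF a] kZ_ok] by simp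
  finally show ?thesis .
next
  case False
  then have b: "kZ m = 4" using kZ_cases[OF assms] by simp
  note a = assms b
  have "Fs (SS kZ (m+8)) uu = Fs (SS kZ m) (tw Zb8)" using Fs_tab[OF sZb8[OF a] kZ_ok] .
  also have "... = Fs (SS kZ m) (\<lambda>b. 3 * tw Zb7 b + tw Zb6 b + 6 * tw Zb5 b + 7 * tw Zb4 b + 7 * tw Zb3 b + 5 * tw Zb2 b + tw Zb1 b)"
    using idZb allb_set by (intro Fs_cong) blast
  also have "... = 3 * Fs (SS kZ m) (tw Zb7) + Fs (SS kZ m) (tw Zb6) + 6 * Fs (SS kZ m) (tw Zb5) + 7 * Fs (SS kZ m) (tw Zb4)
     + 7 * Fs (SS kZ m) (tw Zb3) + 5 * Fs (SS kZ m) (tw Zb2) + Fs (SS kZ m) (tw Zb1)"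
    by (simp add: Fs_add Fs_mult)
  also have "... = 3 * Fs (SS kZ (m+7)) uu + Fs (SS kZ (m+6)) uu
  + 6 * Fs (SS kZ (m+5)) uu + 7 * Fs (SS kZ (m+4)) uu + 7 * Fs (SS kZ (m+3)) uu + 5 * Fs (SS kZ (m+2)) uu + Fs (SS kZ (m+1)) uu"
    using Fs_tab[OF sZb7[OF a] kZ_ok] Fs_tab[OF sZb6[OF a] kZ_ok] Fs_tab[OF sZb5[OF a] kZ_ok]
      Fs_tab[OF sZb4[OF a] kZ_ok] Fs_tab[OF sZb3[OF a] kZ_ok] Fs_tab[OF sZb2[OF a] kZ_ok]
      Fs_tab[OF sZb1[OF a] kZ_ok] by simp
  finally show ?thesis .
qed

lemma apos: assumes "\<forall>i. 2 \<le> kf i \<and> kf i \<le> 4"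
  shows "real (Psi (chain_graph (map kf [0..<n]))) > 0"
proof -
  have "cinv (SS kf n)" by (rule cinv_SS[OF assms])
  then have "finite (fst (SS kf n))" by (cases "SS kf n") (simp add: cinv_def)
  then have "Psi (chain_graph (map kf [0..<n])) \<ge> 1" using Psi_pos by (simp add: chain_graph_def SS_def)
  then show ?thesis by simp
qed

lemma aeq: assumes "\<forall>i. 2 \<le> kf i \<and> kf i \<le> 4"
  shows "real (Psi (chain_graph (map kf [0..<n]))) = real_of_int (Fs (SS kf n) uu)"
  using Psi_SS[OF assms, of n] by (metis of_int_of_nat_eq)


lemma mainL: "(\<lambda>n. root n (real (Psi (L_chain n)))) \<longlonglongrightarrow> largest_real_root (\<lambda>t::real. t^5 - 4*t^4 - t - 1)"
proof -
  define r where "r = largest_real_root (\<lambda>t::real. t^5 - 4*t^4 - t - 1)"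
  define a where "a n = real (Psi (chain_graph (map kL [0..<n])))" for n
  define cf where "cf i = (if i < 6 then [0,1,1,0,0,4::real]!i else 0)" for i :: nat
  have R: "4.019233 < r" "r^5 = (\<Sum>i<5. (if i < 5 then [1,1,0,0,4::real]!i else 0) * r^i)"
    using rootL unfolding r_def by auto
  have "(\<lambda>n. root n (a (n - 1))) \<longlonglongrightarrow> r"
  proof (rule growth[where d=6 and cf=cf and mz=0])
    show "\<And>n. 0 < a n" unfolding a_def using apos[OF kL_ok] by blast
    show "0 < (6::nat)" by simp
    show "\<And>i. 0 \<le> cf i" by (auto simp: cf_def less_Suc_eq numeral_eq_Suc nth_Cons')
    show "\<And>m. 0 \<le> m \<Longrightarrow> a (m + 6) = (\<Sum>i<6. cf i * a (m + i))"
      unfolding a_def aeq[OF kL_ok] sum6 cf_def using recL by simp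
    show "0 < r" using R by simp
    have "r^6 = r * r^5" using power_Suc[of r 5] by simp
    then show "r^6 = (\<Sum>i<6. cf i * r^i)" using R(2) unfolding sum6 sum5 cf_def
      by (simp add: algebra_simps eval_nat_numeral)
  qed
  moreover have "L_chain n = chain_graph (map kL [0..<n - 1])" for n
    by (simp add: L_chain_def kL_def map_replicate_const)
  ultimately show ?thesis unfolding r_def a_def by simp
qed

lemma mainH: "(\<lambda>n. root n (real (Psi (H_chain n)))) \<longlonglongrightarrow> largest_real_root (\<lambda>t::real. t^7 - t^6 - 7*t^5 - 12*t^4 - 6*t^3 - 7*t^2 - 4*t - 2)"
proof -
  define r where "r = largest_real_root (\<lambda>t::real. t^7 - t^6 - 7*t^5 - 12*t^4 - 6*t^3 - 7*t^2 - 4*t - 2)"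
  define a where "a n = real (Psi (chain_graph (map kH [0..<n])))" for n
  define cf where "cf i = (if i < 8 then [0,2,4,7,6,12,7,1::real]!i else 0)" for i :: nat
  have R: "3.810626 < r" "r^7 = (\<Sum>i<7. (if i < 7 then [2,4,7,6,12,7,1::real]!i else 0) * r^i)"
    using rootH unfolding r_def by auto
  have "(\<lambda>n. root n (a (n - 1))) \<longlonglongrightarrow> r"
  proof (rule growth[where d=8 and cf=cf and mz=1])
    show "\<And>n. 0 < a n" unfolding a_def using apos[OF kH_ok] by blast
    show "0 < (8::nat)" by simp
    show "\<And>i. 0 \<le> cf i" by (auto simp: cf_def less_Suc_eq numeral_eq_Suc nth_Cons')
    show "\<And>m. 1 \<le> m \<Longrightarrow> a (m + 8) = (\<Sum>i<8. cf i * a (m + i))"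
      unfolding a_def aeq[OF kH_ok] sum8 cf_def using recH by simp
    show "0 < r" using R by simp
    have "r^8 = r * r^7" using power_Suc[of r 7] by simp
    then show "r^8 = (\<Sum>i<8. cf i * r^i)" using R(2) unfolding sum8 sum7 cf_def
      by (simp add: algebra_simps eval_nat_numeral)
  qed
  moreover have "H_chain n = chain_graph (map kH [0..<n - 1])" for n
    by (simp add: H_chain_def kH_def)
  ultimately show ?thesis unfolding r_def a_def by simp
qed

lemma mainZ: "(\<lambda>n. root n (real (Psi (Z_chain n)))) \<longlonglongrightarrow> largest_real_root (\<lambda>t::real. t^7 - 3*t^6 - t^5 - 6*t^4 - 7*t^3 - 7*t^2 - 5*t - 1)"
proof -
  define r where "r = largest_real_root (\<lambda>t::real. t^7 - 3*t^6 - t^5 - 6*t^4 - 7*t^3 - 7*t^2 - 5*t - 1)"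
  define a where "a n = real (Psi (chain_graph (map kZ [0..<n])))" for n
  define cf where "cf i = (if i < 8 then [0,1,5,7,7,6,1,3::real]!i else 0)" for i :: nat
  have R: "3.832558 < r" "r^7 = (\<Sum>i<7. (if i < 7 then [1,5,7,7,6,1,3::real]!i else 0) * r^i)"
    using rootZ unfolding r_def by auto
  have "(\<lambda>n. root n (a (n - 1))) \<longlonglongrightarrow> r"
  proof (rule growth[where d=8 and cf=cf and mz=1])
    show "\<And>n. 0 < a n" unfolding a_def using apos[OF kZ_ok] by blast
    show "0 < (8::nat)" by simp
    show "\<And>i. 0 \<le> cf i" by (auto simp: cf_def less_Suc_eq numeral_eq_Suc nth_Cons')
    show "\<And>m. 1 \<le> m \<Longrightarrow> a (m + 8) = (\<Sum>i<8. cf i * a (m + i))"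
      unfolding a_def aeq[OF kZ_ok] sum8 cf_def using recZ by simp
    show "0 < r" using R by simp
    have "r^8 = r * r^7" using power_Suc[of r 7] by simp
    then show "r^8 = (\<Sum>i<8. cf i * r^i)" using R(2) unfolding sum8 sum7 cf_def
      by (simp add: algebra_simps eval_nat_numeral)
  qed
  moreover have "Z_chain n = chain_graph (map kZ [0..<n - 1])" for n
    by (simp add: Z_chain_def kZ_def)
  ultimately show ?thesis unfolding r_def a_def by simp
qed

theorem mainTheorem9:
  fixes rL rZ rH :: real
  defines "rL \<equiv> largest_real_root (\<lambda>t. t^5 - 4*t^4 - t - 1)"
      and "rZ \<equiv> largest_real_root (\<lambda>t. t^7 - 3*t^6 - t^5 - 6*t^4 - 7*t^3 - 7*t^2 - 5*t - 1)"
      and "rH \<equiv> largest_real_root (\<lambda>t. t^7 - t^6 - 7*t^5 - 12*t^4 - 6*t^3 - 7*t^2 - 4*t - 2)"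
  shows "((\<lambda>n. root n (real (Psi (L_chain n)))) \<longlonglongrightarrow> rL) \<and>
         ((\<lambda>n. root n (real (Psi (Z_chain n)))) \<longlonglongrightarrow> rZ) \<and>
         ((\<lambda>n. root n (real (Psi (H_chain n)))) \<longlonglongrightarrow> rH) \<and>
         \<bar>rL - 4.01923\<bar> < 0.000005 \<and>
         \<bar>rZ - 3.83256\<bar> < 0.000005 \<and>
         \<bar>rH - 3.81063\<bar> < 0.000005"
proof -
  have bL: "4.019233 < rL" "rL < 4.019234" using rootL unfolding rL_def by auto
  have bZ: "3.832558 < rZ" "rZ < 3.832559" using rootZ unfolding rZ_def by auto
  have bH: "3.810626 < rH" "rH < 3.810627" using rootH unfolding rH_def by auto
  show ?thesis using mainL mainZ mainH bL bZ bH unfolding rL_def rZ_def rH_def by (simp add: abs_less_iff)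
qed


end
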